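(* Let $T$ be a countable tree without leaves (vertices of infinite degree allowed) with root $o$, $P=(p(x,y))$ a stochastic nearest-neighbour transition matrix on $T$, and $\lambda\in\mathbb C$. Suppose the oriented edges carry $\lambda$-weights $f(x,y)$ satisfying for every vertex $x$ and neighbour $y$: (i) $f(x,y)f(y,x)\ne1$; (ii) $u(x,x)=\sum_{v\sim x}p(x,v)f(v,x)$ converges absolutely and $u(x,x)\ne\lambda$; (iii) $\lambda f(x,y)=p(x,y)+(u(x,x)-p(x,y)f(y,x))f(x,y)$; extend $f$ by $f(x,x)=1$ and multiplicatively along geodesics, and let $k(x,w)=f(x,x\wedge w)/f(o,x\wedge w)$. Then a function $h:T\to\mathbb C$ satisfies $Ph=\lambda h$ (i.e. $\sum_{y\sim x}p(x,y)h(y)$ converges absolutely and equals $\lambda h(x)$ for all $x$) if and only if it is of the form $h(x)=\int_{\partial T}k(x,\xi)\,d\nu(\xi)$ for a strong complex distribution $\nu$ on $\partial T$. The distribution $\nu$ is determined by $h$: $\nu=\nu^h$, where $$\nu^h(\partial T)=h(o),\qquad \nu^h(\partial T_x)=f(o,x)\,\frac{h(x)-f(x,x^-)h(x^-)}{1-f(x^-,x)f(x,x^-)}\quad (x\ne o).$$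
   Context: Nearest-neighbour stochastic: $p(x,y)>0$ iff $x\sim y$, rows sum to $1$. $\pi(x,y)$ is the geodesic from $x$ to $y$. Ends: equivalence classes of rays (non-backtracking infinite paths, equivalent if they differ by finitely many initial vertices); $\partial T$ is the set of ends. $T_x$ is the subtree spanned by all $w$ with $x\in\pi(o,w)$; $\partial T_x$ the set of ends with a representative ray in $T_x$; $\partial T_o=\partial T$. For $x\ne o$, $x^-$ is the neighbour of $x$ on $\pi(o,x)$. The confluent $v\wedge w$ is the last common element of $\pi(o,v)$ and $\pi(o,w)$. A distribution on $\partial T$ is a complex finitely additive set function on the algebra of finite disjoint unions of sets $\partial T_x\setminus\bigcup_{y\in S}\partial T_y$ ($S$ a finite set of vertices $y$ with $y^-=x$); integrals of locally constant functions $\varphi=\sum c_i\mathbf 1_{A_i}$ (disjoint $A_i$ in this algebra) are $\sum c_i\nu(A_i)$. It is strong if for each $x$, $\sum_{y:y^-=x}\nu(\partial T_y)$ converges absolutely (to $\nu(\partial T_x)$). For each $x$, $\xi\mapsto k(x,\xi)$ is locally constant. *)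

theory Defs
  imports "HOL-Analysis.Analysis"
begin

definition is_path :: "('a \<Rightarrow> 'a \<Rightarrow> bool) \<Rightarrow> 'a list \<Rightarrow> bool" where
  "is_path E xs \<longleftrightarrow> xs \<noteq> [] \<and> distinct xs \<and>
     (\<forall>i. Suc i < length xs \<longrightarrow> E (xs ! i) (xs ! Suc i))"

definition is_tree :: "('a \<Rightarrow> 'a \<Rightarrow> bool) \<Rightarrow> bool" where
  "is_tree E \<longleftrightarrow> (\<forall>x y. E x y \<longrightarrow> E y x) \<and> (\<forall>x. \<not> E x x) \<and>
     (\<forall>x y. \<exists>!xs. is_path E xs \<and> hd xs = x \<and> last xs = y)"

definition no_leaves :: "('a \<Rightarrow> 'a \<Rightarrow> bool) \<Rightarrow> bool" where
  "no_leaves E \<longleftrightarrow> (\<forall>x. \<exists>y z. E x y \<and> E x z \<and> y \<noteq> z)"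

definition geod :: "('a \<Rightarrow> 'a \<Rightarrow> bool) \<Rightarrow> 'a \<Rightarrow> 'a \<Rightarrow> 'a list" where
  "geod E x y = (THE xs. is_path E xs \<and> hd xs = x \<and> last xs = y)"

text \<open>\<open>x\<^sup>-\<close>: neighbour of x on \<open>\<pi>(o,x)\<close> (meaningful for x \<noteq> o).\<close>
definition pred_v :: "('a \<Rightarrow> 'a \<Rightarrow> bool) \<Rightarrow> 'a \<Rightarrow> 'a \<Rightarrow> 'a" where
  "pred_v E r x = last (butlast (geod E r x))"

definition children :: "('a \<Rightarrow> 'a \<Rightarrow> bool) \<Rightarrow> 'a \<Rightarrow> 'a \<Rightarrow> 'a set" where
  "children E r x = {y. y \<noteq> r \<and> pred_v E r y = x}"

definition Tsub :: "('a \<Rightarrow> 'a \<Rightarrow> bool) \<Rightarrow> 'a \<Rightarrow> 'a \<Rightarrow> 'a set" where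
  "Tsub E r x = {w. x \<in> set (geod E r w)}"

definition is_ray :: "('a \<Rightarrow> 'a \<Rightarrow> bool) \<Rightarrow> (nat \<Rightarrow> 'a) \<Rightarrow> bool" where
  "is_ray E s \<longleftrightarrow> (\<forall>n. E (s n) (s (Suc n)) \<and> s (Suc (Suc n)) \<noteq> s n)"

definition ray_equiv :: "(nat \<Rightarrow> 'a) \<Rightarrow> (nat \<Rightarrow> 'a) \<Rightarrow> bool" where
  "ray_equiv s t \<longleftrightarrow> (\<exists>k l. \<forall>n. s (n + k) = t (n + l))"

definition ends :: "('a \<Rightarrow> 'a \<Rightarrow> bool) \<Rightarrow> (nat \<Rightarrow> 'a) set set" where
  "ends E = {{t. is_ray E t \<and> ray_equiv s t} | s. is_ray E s}"

definition bdT :: "('a \<Rightarrow> 'a \<Rightarrow> bool) \<Rightarrow> 'a \<Rightarrow> 'a \<Rightarrow> (nat \<Rightarrow> 'a) set set" where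
  "bdT E r x = {\<xi> \<in> ends E. \<exists>s\<in>\<xi>. \<forall>n. s n \<in> Tsub E r x}"

text \<open>Confluent \<open>x \<and> \<xi>\<close> of a vertex and an end: the last vertex of \<open>\<pi>(o,x)\<close>
  lying on the ray from o to \<xi> (equivalently, v with \<xi> \<in> \<partial>T_v).\<close>
definition confl_end :: "('a \<Rightarrow> 'a \<Rightarrow> bool) \<Rightarrow> 'a \<Rightarrow> 'a \<Rightarrow> (nat \<Rightarrow> 'a) set \<Rightarrow> 'a" where
  "confl_end E r x \<xi> = last (takeWhile (\<lambda>v. \<xi> \<in> bdT E r v) (geod E r x))"

definition basic_sets :: "('a \<Rightarrow> 'a \<Rightarrow> bool) \<Rightarrow> 'a \<Rightarrow> (nat \<Rightarrow> 'a) set set set" where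
  "basic_sets E r = {bdT E r x - (\<Union>y\<in>S. bdT E r y) | x S. finite S \<and> S \<subseteq> children E r x}"

definition end_algebra :: "('a \<Rightarrow> 'a \<Rightarrow> bool) \<Rightarrow> 'a \<Rightarrow> (nat \<Rightarrow> 'a) set set set" where
  "end_algebra E r = {\<Union>F | F. finite F \<and> F \<subseteq> basic_sets E r \<and> pairwise disjnt F}"

text \<open>A (complex) distribution: finitely additive on the algebra (values
  outside the algebra are irrelevant).\<close>
definition is_distribution ::
  "('a \<Rightarrow> 'a \<Rightarrow> bool) \<Rightarrow> 'a \<Rightarrow> ((nat \<Rightarrow> 'a) set set \<Rightarrow> complex) \<Rightarrow> bool" where
  "is_distribution E r \<nu> \<longleftrightarrow>
     (\<forall>A\<in>end_algebra E r. \<forall>B\<in>end_algebra E r. A \<inter> B = {} \<longrightarrow> \<nu> (A \<union> B) = \<nu> A + \<nu> B)"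

definition strong_distribution ::
  "('a \<Rightarrow> 'a \<Rightarrow> bool) \<Rightarrow> 'a \<Rightarrow> ((nat \<Rightarrow> 'a) set set \<Rightarrow> complex) \<Rightarrow> bool" where
  "strong_distribution E r \<nu> \<longleftrightarrow> is_distribution E r \<nu> \<and>
     (\<forall>x. ((\<lambda>y. norm (\<nu> (bdT E r y))) summable_on children E r x) \<and>
          HAS_SUM (\<lambda>y. \<nu> (bdT E r y)) (children E r x) (\<nu> (bdT E r x)))"

definition adapted_partition ::
  "('a \<Rightarrow> 'a \<Rightarrow> bool) \<Rightarrow> 'a \<Rightarrow> ((nat \<Rightarrow> 'a) set \<Rightarrow> complex) \<Rightarrow> (nat \<Rightarrow> 'a) set set set \<Rightarrow> bool" where
  "adapted_partition E r \<phi> P \<longleftrightarrow> finite P \<and> P \<subseteq> end_algebra E r \<and> pairwise disjnt P \<and>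
     \<Union>P = ends E \<and> (\<forall>A\<in>P. \<forall>\<xi>\<in>A. \<forall>\<eta>\<in>A. \<phi> \<xi> = \<phi> \<eta>)"

definition dist_integral ::
  "('a \<Rightarrow> 'a \<Rightarrow> bool) \<Rightarrow> 'a \<Rightarrow> ((nat \<Rightarrow> 'a) set set \<Rightarrow> complex) \<Rightarrow> ((nat \<Rightarrow> 'a) set \<Rightarrow> complex) \<Rightarrow> complex" where
  "dist_integral E r \<nu> \<phi> =
     (let P = (SOME P. adapted_partition E r \<phi> P) in \<Sum>A\<in>P. \<phi> (SOME \<xi>. \<xi> \<in> A) * \<nu> A)"

definition fext :: "('a \<Rightarrow> 'a \<Rightarrow> bool) \<Rightarrow> ('a \<Rightarrow> 'a \<Rightarrow> complex) \<Rightarrow> 'a \<Rightarrow> 'a \<Rightarrow> complex" where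
  "fext E f x y = (let xs = geod E x y in prod_list (map (\<lambda>(a, b). f a b) (zip xs (tl xs))))"

definition uval :: "('a \<Rightarrow> 'a \<Rightarrow> bool) \<Rightarrow> ('a \<Rightarrow> 'a \<Rightarrow> real) \<Rightarrow> ('a \<Rightarrow> 'a \<Rightarrow> complex) \<Rightarrow> 'a \<Rightarrow> complex" where
  "uval E p f x = (\<Sum>\<^sub>\<infinity>v\<in>{v. E x v}. complex_of_real (p x v) * f v x)"

definition kernel :: "('a \<Rightarrow> 'a \<Rightarrow> bool) \<Rightarrow> 'a \<Rightarrow> ('a \<Rightarrow> 'a \<Rightarrow> complex) \<Rightarrow> 'a \<Rightarrow> (nat \<Rightarrow> 'a) set \<Rightarrow> complex" where
  "kernel E r f x \<xi> = fext E f x (confl_end E r x \<xi>) / fext E f r (confl_end E r x \<xi>)"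

definition is_eigenfunction ::
  "('a \<Rightarrow> 'a \<Rightarrow> bool) \<Rightarrow> ('a \<Rightarrow> 'a \<Rightarrow> real) \<Rightarrow> complex \<Rightarrow> ('a \<Rightarrow> complex) \<Rightarrow> bool" where
  "is_eigenfunction E p lam h \<longleftrightarrow>
     (\<forall>x. ((\<lambda>y. norm (complex_of_real (p x y) * h y)) summable_on {y. E x y}) \<and>
          (\<Sum>\<^sub>\<infinity>y\<in>{y. E x y}. complex_of_real (p x y) * h y) = lam * h x)"

end

theory Submission
  imports Defs
begin


lemma path_take: "is_path E xs \<Longrightarrow> 0 < n \<Longrightarrow> is_path E (take n xs)"
  unfolding is_path_def by auto

lemma path_snoc: "is_path E xs \<Longrightarrow> E (last xs) y \<Longrightarrow> y \<notin> set xs \<Longrightarrow> is_path E (xs @ [y])"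
  unfolding is_path_def
  by (auto simp: nth_append last_conv_nth less_Suc_eq) (metis diff_Suc_1 One_nat_def)

locale tr =
  fixes E :: "'a \<Rightarrow> 'a \<Rightarrow> bool" and r :: 'a
  assumes tree: "is_tree E" and noleaf: "no_leaves E"
begin

abbreviation P where "P x \<equiv> geod E r x"
abbreviation pv where "pv \<equiv> pred_v E r"

lemma Esym: "E x y \<Longrightarrow> E y x" using tree unfolding is_tree_def by blast
lemma Eirr: "\<not> E x x" using tree unfolding is_tree_def by blast

lemma geod_prop: "is_path E (geod E x y) \<and> hd (geod E x y) = x \<and> last (geod E x y) = y"
proof -
  have "\<exists>!xs. is_path E xs \<and> hd xs = x \<and> last xs = y" using tree unfolding is_tree_def by blast
  then show ?thesis unfolding geod_def by (rule theI')
qed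

lemma geod_unique: "is_path E xs \<Longrightarrow> hd xs = x \<Longrightarrow> last xs = y \<Longrightarrow> geod E x y = xs"
proof -
  assume a: "is_path E xs" "hd xs = x" "last xs = y"
  have "\<exists>!xs. is_path E xs \<and> hd xs = x \<and> last xs = y" using tree unfolding is_tree_def by blast
  then show ?thesis unfolding geod_def by (rule the1_equality) (use a in auto)
qed

lemma geod_ne: "geod E x y \<noteq> []" using geod_prop unfolding is_path_def by blast
lemma P_path: "is_path E (P x)" using geod_prop by blast
lemma P_hd: "hd (P x) = r" using geod_prop by blast
lemma P_last: "last (P x) = x" using geod_prop by blast
lemma P_ne: "P x \<noteq> []" using geod_ne by blast
lemma P_dist: "distinct (P x)" using P_path unfolding is_path_def by blast
lemma r_in_P: "r \<in> set (P x)" using P_hd P_ne hd_in_set by metis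
lemma x_in_P: "x \<in> set (P x)" using P_last P_ne last_in_set by metis

lemma geod_refl: "geod E x x = [x]"
  by (rule geod_unique) (auto simp: is_path_def)

lemma geod_edge: assumes "E x y" shows "geod E x y = [x, y]"
proof -
  have "x \<noteq> y" using assms Eirr by metis
  then show ?thesis using assms by (intro geod_unique) (auto simp: is_path_def less_Suc_eq)
qed

lemma P_r: "P r = [r]" by (rule geod_refl)

lemma P_take: assumes "i < length (P x)" shows "P (P x ! i) = take (Suc i) (P x)"
proof (rule geod_unique)
  show "is_path E (take (Suc i) (P x))" using path_take[OF P_path] by auto
  show "hd (take (Suc i) (P x)) = r" using P_hd P_ne by (simp add: hd_take)
  show "last (take (Suc i) (P x)) = P x ! i" using assms by (simp add: take_Suc_conv_app_nth)
qed

lemma P_anc: assumes "v \<in> set (P x)" shows "\<exists>i. i < length (P x) \<and> v = P x ! i \<and> P v = take (Suc i) (P x)"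
  using assms P_take by (metis in_set_conv_nth)

lemma anc_sub: "v \<in> set (P x) \<Longrightarrow> set (P v) \<subseteq> set (P x)"
proof -
  assume "v \<in> set (P x)"
  then obtain i where "P v = take (Suc i) (P x)" using P_anc by blast
  then show ?thesis by (simp add: set_take_subset)
qed

lemma anc_trans: "u \<in> set (P v) \<Longrightarrow> v \<in> set (P x) \<Longrightarrow> u \<in> set (P x)"
  using anc_sub by blast

lemma anc_cmp: assumes "u \<in> set (P w)" "v \<in> set (P w)" shows "u \<in> set (P v) \<or> v \<in> set (P u)"
proof -
  obtain i where i: "i < length (P w)" "u = P w ! i" "P u = take (Suc i) (P w)" using P_anc assms(1) by blast
  obtain j where j: "j < length (P w)" "v = P w ! j" "P v = take (Suc j) (P w)" using P_anc assms(2) by blast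
  show ?thesis
  proof (cases "i \<le> j")
    case True
    then have "u \<in> set (take (Suc j) (P w))" using i j by (auto simp: in_set_conv_nth intro!: exI[of _ i])
    then show ?thesis using j by simp
  next
    case False
    then have "v \<in> set (take (Suc i) (P w))" using i j by (auto simp: in_set_conv_nth intro!: exI[of _ j])
    then show ?thesis using i by simp
  qed
qed

lemma anc_eq_len: assumes "u \<in> set (P v)" "length (P u) = length (P v)" shows "u = v"
proof -
  obtain i where i: "i < length (P v)" "u = P v ! i" "P u = take (Suc i) (P v)" using P_anc assms(1) by blast
  then have "length (P v) \<le> Suc i" using assms(2) by simp
  then have "P u = P v" using i(3) by simp
  then show ?thesis using P_last by metis
qed

lemma anc_len: "u \<in> set (P v) \<Longrightarrow> length (P u) \<le> length (P v)"
  using P_anc by fastforce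

lemma anc_antisym: "u \<in> set (P v) \<Longrightarrow> v \<in> set (P u) \<Longrightarrow> u = v"
proof -
  assume a: "u \<in> set (P v)" "v \<in> set (P u)"
  then have "length (P u) = length (P v)" using anc_len by (simp add: le_antisym)
  then show "u = v" using anc_eq_len a(1) by blast
qed

lemma P_eq_r: "P x = [r] \<Longrightarrow> x = r" using P_last by (metis last_ConsL)

lemma len_P_ge2: assumes "x \<noteq> r" shows "2 \<le> length (P x)"
proof (rule ccontr)
  assume "\<not> 2 \<le> length (P x)"
  moreover have "length (P x) \<noteq> 0" using P_ne[of x] by simp
  ultimately have "length (P x) = 1" by linarith
  then have "P x = [r]" using P_hd[of x] by (cases "P x") auto
  then show False using assms P_eq_r by blast
qed

lemma P_pred: assumes "x \<noteq> r" shows "P x = P (pv x) @ [x]" "E (pv x) x"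
proof -
  have l: "2 \<le> length (P x)" using len_P_ge2 assms by blast
  have bp: "butlast (P x) = take (length (P x) - 1) (P x)" by (simp add: butlast_conv_take)
  have "P (pv x) = butlast (P x)"
  proof (rule geod_unique)
    show "is_path E (butlast (P x))" using bp path_take[OF P_path] l by simp
    show "hd (butlast (P x)) = r" using P_hd l bp by (simp add: hd_take)
    show "last (butlast (P x)) = pv x" unfolding pred_v_def by simp
  qed
  then show "P x = P (pv x) @ [x]" using P_last P_ne by (metis append_butlast_last_id)
  then have "E (P x ! (length (P x) - 2)) (P x ! Suc (length (P x) - 2))"
    using P_path l unfolding is_path_def by (metis Suc_diff_Suc diff_less numeral_2_eq_2 le_less_trans lessI zero_less_Suc less_le_trans)
  moreover have "P x ! (length (P x) - 2) = pv x"
    using \<open>P x = P (pv x) @ [x]\<close> l P_ne[of "pv x"]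
  proof -
    have e: "P x = P (pv x) @ [x]" by fact
    have len: "length (P x) = Suc (length (P (pv x)))" using e by simp
    have "P x ! (length (P x) - 2) = P (pv x) ! (length (P (pv x)) - 1)"
      using e len P_ne[of "pv x"] by (simp add: nth_append)
    also have "\<dots> = pv x" using P_last[of "pv x"] P_ne[of "pv x"] by (simp add: last_conv_nth)
    finally show ?thesis .
  qed
  moreover have "Suc (length (P x) - 2) = length (P x) - 1" using l by simp
  moreover have "P x ! (length (P x) - 1) = x" using P_last P_ne by (simp add: last_conv_nth)
  ultimately show "E (pv x) x" by simp
qed


lemma pv_facts: assumes "x \<noteq> r"
  shows "pv x \<in> set (P x)" "pv x \<noteq> x" "length (P x) = Suc (length (P (pv x)))" "x \<notin> set (P (pv x))"
proof -
  have e: "P x = P (pv x) @ [x]" using P_pred assms by blast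
  show "pv x \<in> set (P x)" using e x_in_P[of "pv x"] by simp
  show "x \<notin> set (P (pv x))" using e P_dist[of x] by simp
  then show "pv x \<noteq> x" using x_in_P by metis
  show "length (P x) = Suc (length (P (pv x)))" using e by simp
qed

lemma child_P: assumes "c \<noteq> r" "pv c = v"
  shows "P c = P v @ [c]" "E v c" "c \<notin> set (P v)" "length (P c) = Suc (length (P v))" "v \<in> set (P c)"
  using P_pred[OF assms(1)] pv_facts[OF assms(1)] assms(2) by auto

lemma neighbour: assumes "E x y" shows "(x \<noteq> r \<and> y = pv x) \<or> (y \<noteq> r \<and> pv y = x)"
proof (cases "y \<in> set (P x)")
  case False
  have "P y = P x @ [y]"
    by (rule geod_unique) (use False assms P_path P_last P_hd P_ne in \<open>auto intro!: path_snoc\<close>)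
  then have "y \<noteq> r" using False r_in_P[of x] by auto
  moreover have "pv y = x" unfolding pred_v_def using \<open>P y = P x @ [y]\<close> P_last by simp
  ultimately show ?thesis by blast
next
  case True
  have yx: "y \<noteq> x" using assms Eirr by blast
  have xr: "x \<noteq> r" using True yx P_r by auto
  have e: "P x = P (pv x) @ [x]" using P_pred xr by blast
  have yp: "y \<in> set (P (pv x))" using True yx e by auto
  have "P x = P y @ [x]"
  proof (rule geod_unique)
    have "x \<notin> set (P y)" using anc_sub[OF yp] pv_facts(4)[OF xr] by blast
    then show "is_path E (P y @ [x])" using P_path P_last Esym[OF assms] by (auto intro!: path_snoc)
  qed (use P_hd P_ne in auto)
  then have "P y = P (pv x)" using e by simp
  then have "y = pv x" using P_last by metis
  then show ?thesis using xr by blast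
qed

lemma children_iff: "c \<in> children E r v \<longleftrightarrow> c \<noteq> r \<and> pv c = v"
  unfolding children_def by simp

lemma exists_child: "\<exists>c. c \<noteq> r \<and> pv c = v"
proof -
  obtain y z where yz: "E v y" "E v z" "y \<noteq> z" using noleaf unfolding no_leaves_def by blast
  show ?thesis
  proof (cases "v \<noteq> r \<and> y = pv v")
    case True
    then have "\<not> (v \<noteq> r \<and> z = pv v)" using yz by blast
    then show ?thesis using neighbour[OF yz(2)] by blast
  next
    case False
    then show ?thesis using neighbour[OF yz(1)] by blast
  qed
qed

lemma child_on_path: assumes "v \<in> set (P w)" "v \<noteq> w"
  shows "\<exists>z\<in>set (P w). z \<noteq> r \<and> pv z = v"
proof -
  obtain i where i: "i < length (P w)" "v = P w ! i" "P v = take (Suc i) (P w)" using P_anc assms(1) by blast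
  have si: "Suc i < length (P w)"
  proof (rule ccontr)
    assume "\<not> Suc i < length (P w)"
    then have "P v = P w" using i by simp
    then show False using assms P_last by metis
  qed
  define z where "z = P w ! Suc i"
  have pz: "P z = P v @ [z]" using P_take[OF si] i si unfolding z_def by (simp add: take_Suc_conv_app_nth)
  have "z \<noteq> r"
  proof
    assume "z = r"
    then have "P z = [r]" using P_r by simp
    with pz P_ne[of v] show False by (cases "P v") auto
  qed
  moreover have "pv z = v" unfolding pred_v_def using pz P_last by simp
  moreover have "z \<in> set (P w)" using si unfolding z_def by simp
  ultimately show ?thesis by blast
qed

lemma children_same: assumes "c \<noteq> r" "pv c = v" "c' \<noteq> r" "pv c' = v" "c \<in> set (P w)" "c' \<in> set (P w)"
  shows "c = c'"
proof -
  have l: "length (P c) = length (P c')" using child_P assms by simp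
  from anc_cmp[OF assms(5,6)] show ?thesis using anc_eq_len[of c c'] anc_eq_len[of c' c] l by auto
qed

lemma children_incomp: assumes "c \<noteq> r" "pv c = v" "c' \<noteq> r" "pv c' = v" "c \<noteq> c'"
  shows "c \<notin> set (P c')"
proof
  assume "c \<in> set (P c')"
  then have "c = c'" using anc_eq_len child_P(4)[OF assms(1,2)] child_P(4)[OF assms(3,4)] by simp
  with assms(5) show False by simp
qed

lemma Tsub_iff: "w \<in> Tsub E r x \<longleftrightarrow> x \<in> set (P w)" unfolding Tsub_def by simp

subsection \<open>Ends\<close>

lemma ray_equiv_refl: "ray_equiv s s" unfolding ray_equiv_def by (rule exI[of _ 0], rule exI[of _ 0]) simp

lemma ray_equiv_sym: "ray_equiv s t \<Longrightarrow> ray_equiv t s" unfolding ray_equiv_def by metis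

lemma ray_equiv_trans: assumes "ray_equiv s t" "ray_equiv t u" shows "ray_equiv s u"
proof -
  obtain k l where 1: "\<forall>n. s (n + k) = t (n + l)" using assms(1) unfolding ray_equiv_def by blast
  obtain k' l' where 2: "\<forall>n. t (n + k') = u (n + l')" using assms(2) unfolding ray_equiv_def by blast
  have "\<forall>n. s (n + (k + k')) = u (n + (l + l'))"
  proof
    fix n
    have "s (n + (k + k')) = s ((n + k') + k)" by (simp add: ac_simps)
    also have "\<dots> = t ((n + l) + k')" using 1[rule_format, of "n + k'"] by (simp add: ac_simps)
    also have "\<dots> = u ((n + l) + l')" using 2 by simp
    finally show "s (n + (k + k')) = u (n + (l + l'))" by (simp add: ac_simps)
  qed
  then show ?thesis unfolding ray_equiv_def by blast
qed

lemma ends_equiv: assumes "\<xi> \<in> ends E" "s \<in> \<xi>" "t \<in> \<xi>" shows "ray_equiv s t"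
proof -
  obtain s0 where "\<xi> = {t. is_ray E t \<and> ray_equiv s0 t}" using assms(1) unfolding ends_def by blast
  then show ?thesis using assms ray_equiv_sym ray_equiv_trans by blast
qed

lemma bdT_ends: "bdT E r x \<subseteq> ends E" unfolding bdT_def by blast

lemma ends_ne: "\<xi> \<in> ends E \<Longrightarrow> \<exists>s. s \<in> \<xi>"
  unfolding ends_def using ray_equiv_refl by blast

lemma bdT_r: "bdT E r r = ends E" unfolding bdT_def Tsub_def using r_in_P ends_ne by blast

lemma bdT_mono: "u \<in> set (P v) \<Longrightarrow> bdT E r v \<subseteq> bdT E r u"
  unfolding bdT_def Tsub_def using anc_trans by blast

lemma bdT_disj: assumes "u \<notin> set (P v)" "v \<notin> set (P u)" shows "bdT E r u \<inter> bdT E r v = {}"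
proof (rule ccontr)
  assume "bdT E r u \<inter> bdT E r v \<noteq> {}"
  then obtain \<xi> s t where x: "\<xi> \<in> ends E" "s \<in> \<xi>" "t \<in> \<xi>" "\<forall>n. s n \<in> Tsub E r u" "\<forall>n. t n \<in> Tsub E r v"
    unfolding bdT_def by blast
  obtain k l where "\<forall>n. s (n + k) = t (n + l)" using ends_equiv[OF x(1-3)] unfolding ray_equiv_def by blast
  then have "s k = t l" by (metis add_0)
  then have "u \<in> set (P (s k))" "v \<in> set (P (s k))" using x(4)[rule_format, of k] x(5)[rule_format, of l] unfolding Tsub_def by auto
  then show False using anc_cmp assms by blast
qed

lemma children_disj: assumes "c \<noteq> r" "pv c = v" "c' \<noteq> r" "pv c' = v" "c \<noteq> c'"
  shows "bdT E r c \<inter> bdT E r c' = {}"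
  by (rule bdT_disj) (use children_incomp[OF assms] children_incomp[of c' v c] assms in auto)

definition chd :: "'a \<Rightarrow> 'a" where "chd u = (SOME c. c \<noteq> r \<and> pv c = u)"

lemma chd: "chd u \<noteq> r" "pv (chd u) = u"
  using someI_ex[OF exists_child[of u]] unfolding chd_def by auto

lemma bdT_ne: "bdT E r v \<noteq> {}"
proof -
  define s where "s = rec_nat v (\<lambda>_ u. chd u)"
  have s0: "s 0 = v" and sS: "\<And>n. s (Suc n) = chd (s n)" unfolding s_def by simp_all
  have len: "length (P (s n)) = length (P v) + n" for n
    by (induction n) (simp_all add: s0 sS child_P(4)[OF chd])
  have ray: "is_ray E s" unfolding is_ray_def
  proof
    fix n
    have "E (s n) (s (Suc n))" using sS child_P(2)[OF chd] by simp
    moreover have "s (Suc (Suc n)) \<noteq> s n" using len[of "Suc (Suc n)"] len[of n] by auto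
    ultimately show "E (s n) (s (Suc n)) \<and> s (Suc (Suc n)) \<noteq> s n" by blast
  qed
  have sub: "v \<in> set (P (s n))" for n
  proof (induction n)
    case 0 then show ?case using s0 x_in_P by simp
  next
    case (Suc n) then show ?case using sS child_P(1)[OF chd] by simp
  qed
  define \<xi> where "\<xi> = {t. is_ray E t \<and> ray_equiv s t}"
  have "\<xi> \<in> ends E" unfolding ends_def \<xi>_def using ray by blast
  moreover have "s \<in> \<xi>" unfolding \<xi>_def using ray ray_equiv_refl by blast
  ultimately have "\<xi> \<in> bdT E r v" unfolding bdT_def using sub Tsub_iff by blast
  then show ?thesis by blast
qed

end



context tr begin

abbreviation bd where "bd \<equiv> bdT E r"
abbreviation alg where "alg \<equiv> end_algebra E r"

lemma empty_alg: "{} \<in> alg" unfolding end_algebra_def by (rule CollectI, rule exI[of _ "{}"]) auto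

lemma basic_alg: "B \<in> basic_sets E r \<Longrightarrow> B \<in> alg"
  unfolding end_algebra_def by (rule CollectI, rule exI[of _ "{B}"]) auto

lemma basic_memI: "finite S \<Longrightarrow> S \<subseteq> children E r x \<Longrightarrow> bd x - (\<Union>y\<in>S. bd y) \<in> basic_sets E r"
  unfolding basic_sets_def by blast

lemma bdT_basic: "bd x \<in> basic_sets E r"
  using basic_memI[of "{}" x] by simp

lemma bdT_alg: "bd x \<in> alg" using basic_alg bdT_basic by blast

lemma basic_sub_ends: "B \<in> basic_sets E r \<Longrightarrow> B \<subseteq> ends E"
  unfolding basic_sets_def using bdT_ends by blast

lemma alg_sub_ends: "A \<in> alg \<Longrightarrow> A \<subseteq> ends E"
  unfolding end_algebra_def using basic_sub_ends by blast

lemma algI: "finite F \<Longrightarrow> F \<subseteq> basic_sets E r \<Longrightarrow> pairwise disjnt F \<Longrightarrow> \<Union>F \<in> alg"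
  unfolding end_algebra_def by blast

lemma algE: assumes "A \<in> alg"
  obtains F where "A = \<Union>F" "finite F" "F \<subseteq> basic_sets E r" "pairwise disjnt F"
  using assms unfolding end_algebra_def by blast

lemma alg_union: assumes "A \<in> alg" "B \<in> alg" "A \<inter> B = {}" shows "A \<union> B \<in> alg"
proof -
  obtain F where F: "A = \<Union>F" "finite F" "F \<subseteq> basic_sets E r" "pairwise disjnt F"
    using assms(1) by (rule algE)
  obtain G where G: "B = \<Union>G" "finite G" "G \<subseteq> basic_sets E r" "pairwise disjnt G"
    using assms(2) by (rule algE)
  have "pairwise disjnt (F \<union> G)" unfolding pairwise_def
  proof (intro ballI impI)
    fix X Y assume h: "X \<in> F \<union> G" "Y \<in> F \<union> G" "X \<noteq> Y"
    have XA: "X \<in> F \<Longrightarrow> X \<subseteq> A" "X \<in> G \<Longrightarrow> X \<subseteq> B" "Y \<in> F \<Longrightarrow> Y \<subseteq> A" "Y \<in> G \<Longrightarrow> Y \<subseteq> B"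
      using F(1) G(1) by auto
    consider "X \<in> F" "Y \<in> F" | "X \<in> G" "Y \<in> G" | "X \<in> F" "Y \<in> G" | "X \<in> G" "Y \<in> F"
      using h(1,2) by blast
    then show "disjnt X Y"
    proof cases
      case 1 then show ?thesis using F(4) h(3) unfolding pairwise_def by blast
    next
      case 2 then show ?thesis using G(4) h(3) unfolding pairwise_def by blast
    next
      case 3 then have "X \<subseteq> A" "Y \<subseteq> B" using XA by auto
      then show ?thesis using assms(3) unfolding disjnt_def by blast
    next
      case 4 then have "X \<subseteq> B" "Y \<subseteq> A" using XA by auto
      then show ?thesis using assms(3) unfolding disjnt_def by blast
    qed
  qed
  moreover have "A \<union> B = \<Union>(F \<union> G)" using F(1) G(1) by simp
  ultimately show ?thesis using algI[of "F \<union> G"] F G by simp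
qed

lemma BB_aux:
  assumes S: "finite S" "S \<subseteq> children E r x" and S': "finite S'" "S' \<subseteq> children E r y"
    and xy: "x \<in> set (P y)"
  shows "(bd x - (\<Union>z\<in>S. bd z)) \<inter> (bd y - (\<Union>z\<in>S'. bd z)) \<in> basic_sets E r
       \<or> (bd x - (\<Union>z\<in>S. bd z)) \<inter> (bd y - (\<Union>z\<in>S'. bd z)) = {}"
proof (cases "x = y")
  case True
  have "(bd x - (\<Union>z\<in>S. bd z)) \<inter> (bd y - (\<Union>z\<in>S'. bd z)) = bd x - (\<Union>z\<in>S \<union> S'. bd z)"
    using True by blast
  moreover have "bd x - (\<Union>z\<in>S \<union> S'. bd z) \<in> basic_sets E r"
    using S S' True by (intro basic_memI) auto
  ultimately show ?thesis by simp
next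
  case False
  obtain z where z: "z \<in> set (P y)" "z \<noteq> r" "pv z = x" using child_on_path[OF xy False] by blast
  have yz: "bd y \<subseteq> bd z" using bdT_mono z(1) by blast
  have zx: "bd z \<subseteq> bd x" using bdT_mono child_P(5)[OF z(2,3)] by blast
  show ?thesis
  proof (cases "z \<in> S")
    case True
    then have "(bd x - (\<Union>z\<in>S. bd z)) \<inter> (bd y - (\<Union>z\<in>S'. bd z)) = {}" using yz by blast
    then show ?thesis by simp
  next
    case False
    have "bd z \<inter> bd s = {}" if "s \<in> S" for s
      using children_disj[OF z(2,3)] that S(2) False unfolding children_def by force
    then have "bd y \<subseteq> bd x - (\<Union>z\<in>S. bd z)" using yz zx by blast
    then have "(bd x - (\<Union>z\<in>S. bd z)) \<inter> (bd y - (\<Union>z\<in>S'. bd z)) = bd y - (\<Union>z\<in>S'. bd z)" by blast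
    then show ?thesis using basic_memI[OF S'] by simp
  qed
qed

lemma BB: assumes "C \<in> basic_sets E r" "D \<in> basic_sets E r"
  shows "C \<inter> D \<in> basic_sets E r \<or> C \<inter> D = {}"
proof -
  obtain x S where C: "C = bd x - (\<Union>z\<in>S. bd z)" "finite S" "S \<subseteq> children E r x"
    using assms(1) unfolding basic_sets_def by blast
  obtain y S' where D: "D = bd y - (\<Union>z\<in>S'. bd z)" "finite S'" "S' \<subseteq> children E r y"
    using assms(2) unfolding basic_sets_def by blast
  consider "x \<in> set (P y)" | "y \<in> set (P x)" | "x \<notin> set (P y) \<and> y \<notin> set (P x)" by blast
  then show ?thesis
  proof cases
    case 1 then show ?thesis using BB_aux[OF C(2,3) D(2,3)] C(1) D(1) by simp
  next
    case 2 then show ?thesis using BB_aux[OF D(2,3) C(2,3)] C(1) D(1) by (simp add: Int_commute)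
  next
    case 3 then have "bd x \<inter> bd y = {}" using bdT_disj by blast
    then show ?thesis using C(1) D(1) by blast
  qed
qed

lemma alg_Int: assumes "A \<in> alg" "B \<in> alg" shows "A \<inter> B \<in> alg"
proof -
  obtain F where F: "A = \<Union>F" "finite F" "F \<subseteq> basic_sets E r" "pairwise disjnt F"
    using assms(1) by (rule algE)
  obtain G where G: "B = \<Union>G" "finite G" "G \<subseteq> basic_sets E r" "pairwise disjnt G"
    using assms(2) by (rule algE)
  define H where "H = (\<lambda>(C, D). C \<inter> D) ` (F \<times> G) - {{}}"
  have fin: "finite H" unfolding H_def using F(2) G(2) by simp
  have sub: "H \<subseteq> basic_sets E r"
  proof
    fix X assume "X \<in> H"
    then obtain C D where "C \<in> F" "D \<in> G" "X = C \<inter> D" "X \<noteq> {}" unfolding H_def by blast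
    then show "X \<in> basic_sets E r" using BB F(3) G(3) by blast
  qed
  have pw: "pairwise disjnt H"
    unfolding pairwise_def
  proof (intro ballI impI)
    fix X Y assume "X \<in> H" "Y \<in> H" "X \<noteq> Y"
    then obtain C D C' D' where "C \<in> F" "D \<in> G" "X = C \<inter> D" "C' \<in> F" "D' \<in> G" "Y = C' \<inter> D'"
      unfolding H_def by blast
    note h = this
    show "disjnt X Y"
    proof (cases "C = C'")
      case True
      then have "D \<noteq> D'" using h \<open>X \<noteq> Y\<close> by blast
      then have "disjnt D D'" using G(4) h(2,5) unfolding pairwise_def by blast
      then show ?thesis using h(3,6) unfolding disjnt_def by blast
    next
      case False
      then have "disjnt C C'" using F(4) h(1,4) unfolding pairwise_def by blast
      then show ?thesis using h(3,6) unfolding disjnt_def by blast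
    qed
  qed
  have "\<Union>H = A \<inter> B" unfolding H_def F(1) G(1) by blast
  then show ?thesis using algI[OF fin sub pw] by simp
qed

lemma dist_empty: assumes "is_distribution E r \<nu>" shows "\<nu> {} = 0"
proof -
  have "\<nu> ({} \<union> {}) = \<nu> {} + \<nu> {}" using assms empty_alg unfolding is_distribution_def by blast
  then show ?thesis by simp
qed

lemma dist_add: "is_distribution E r \<nu> \<Longrightarrow> A \<in> alg \<Longrightarrow> B \<in> alg \<Longrightarrow> A \<inter> B = {} \<Longrightarrow> \<nu> (A \<union> B) = \<nu> A + \<nu> B"
  unfolding is_distribution_def by blast

lemma dist_finsum:
  assumes d: "is_distribution E r \<nu>" and fin: "finite I"
  shows "(\<forall>i\<in>I. g i \<in> alg) \<longrightarrow> (\<forall>i\<in>I. \<forall>j\<in>I. i \<noteq> j \<longrightarrow> g i \<inter> g j = {}) \<longrightarrow>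
     (\<Union>i\<in>I. g i) \<in> alg \<and> \<nu> (\<Union>i\<in>I. g i) = (\<Sum>i\<in>I. \<nu> (g i))"
  using fin
proof (induction I rule: finite_induct)
  case empty
  then show ?case using empty_alg dist_empty[OF d] by simp
next
  case (insert i I)
  show ?case
  proof (intro impI)
    assume a: "\<forall>j\<in>insert i I. g j \<in> alg" "\<forall>j\<in>insert i I. \<forall>k\<in>insert i I. j \<noteq> k \<longrightarrow> g j \<inter> g k = {}"
    have h1: "\<forall>j\<in>I. g j \<in> alg" using a(1) by simp
    have h2: "\<forall>j\<in>I. \<forall>k\<in>I. j \<noteq> k \<longrightarrow> g j \<inter> g k = {}" using a(2) by simp
    have IH: "(\<Union>i\<in>I. g i) \<in> alg" "\<nu> (\<Union>i\<in>I. g i) = (\<Sum>i\<in>I. \<nu> (g i))"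
      using mp[OF mp[OF insert.IH h1] h2] by auto
    have "g i \<inter> g j = {}" if "j \<in> I" for j
    proof -
      have "i \<noteq> j" using that insert(2) by blast
      then show ?thesis using a(2) that by simp
    qed
    then have dj: "g i \<inter> (\<Union>i\<in>I. g i) = {}" by blast
    have "(\<Union>j\<in>insert i I. g j) = g i \<union> (\<Union>i\<in>I. g i)" by simp
    then show "(\<Union>j\<in>insert i I. g j) \<in> alg \<and> \<nu> (\<Union>j\<in>insert i I. g j) = (\<Sum>j\<in>insert i I. \<nu> (g j))"
      using alg_union[OF _ IH(1) dj] dist_add[OF d _ IH(1) dj] a(1) IH(2) insert(1,2) by simp
  qed
qed

lemma dist_finsum':
  assumes d: "is_distribution E r \<nu>" and fin: "finite I"
    and a: "\<And>i. i \<in> I \<Longrightarrow> g i \<in> alg" and b: "\<And>i j. i \<in> I \<Longrightarrow> j \<in> I \<Longrightarrow> i \<noteq> j \<Longrightarrow> g i \<inter> g j = {}"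
  shows "(\<Union>i\<in>I. g i) \<in> alg \<and> \<nu> (\<Union>i\<in>I. g i) = (\<Sum>i\<in>I. \<nu> (g i))"
proof -
  have 1: "\<forall>i\<in>I. g i \<in> alg" using a by blast
  have 2: "\<forall>i\<in>I. \<forall>j\<in>I. i \<noteq> j \<longrightarrow> g i \<inter> g j = {}" using b by blast
  show ?thesis using mp[OF mp[OF dist_finsum[OF d fin] 1] 2] .
qed

lemma integral_eq:
  assumes d: "is_distribution E r \<nu>" and Q: "adapted_partition E r \<phi> Q"
  shows "dist_integral E r \<nu> \<phi> = (\<Sum>B\<in>Q. \<phi> (SOME \<xi>. \<xi> \<in> B) * \<nu> B)"
proof -
  define P0 where "P0 = (SOME P. adapted_partition E r \<phi> P)"
  have P0: "adapted_partition E r \<phi> P0" unfolding P0_def using Q by (rule someI)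
  define c where "c A = \<phi> (SOME \<xi>. \<xi> \<in> A)" for A
  have dI: "dist_integral E r \<nu> \<phi> = (\<Sum>A\<in>P0. c A * \<nu> A)"
    unfolding dist_integral_def P0_def c_def by simp
  have split: "\<nu> A = (\<Sum>B\<in>R. \<nu> (A \<inter> B))" if R: "adapted_partition E r \<phi> R" and A: "A \<in> alg" for A R
  proof -
    have fR: "finite R" "R \<subseteq> alg" "pairwise disjnt R" "\<Union>R = ends E"
      using R unfolding adapted_partition_def by auto
    have "(\<Union>B\<in>R. A \<inter> B) = A" using fR(4) alg_sub_ends[OF A] by blast
    moreover have "(\<Union>B\<in>R. A \<inter> B) \<in> alg \<and> \<nu> (\<Union>B\<in>R. A \<inter> B) = (\<Sum>B\<in>R. \<nu> (A \<inter> B))"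
      using dist_finsum[OF d fR(1), of "\<lambda>B. A \<inter> B"] alg_Int[OF A] fR(2,3)
      unfolding pairwise_def disjnt_def by blast
    ultimately show ?thesis by simp
  qed
  have cc: "c A * \<nu> (A \<inter> B) = c B * \<nu> (A \<inter> B)" if "A \<in> P0" "B \<in> Q" for A B
  proof (cases "A \<inter> B = {}")
    case True then show ?thesis using dist_empty[OF d] by simp
  next
    case False
    then obtain \<xi> where x: "\<xi> \<in> A" "\<xi> \<in> B" by blast
    have "(SOME \<xi>. \<xi> \<in> A) \<in> A" using x(1) by (rule someI)
    moreover have "(SOME \<xi>. \<xi> \<in> B) \<in> B" using x(2) by (rule someI)
    moreover have "\<forall>A\<in>P0. \<forall>\<xi>\<in>A. \<forall>\<eta>\<in>A. \<phi> \<xi> = \<phi> \<eta>" using P0 unfolding adapted_partition_def by blast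
    moreover have "\<forall>A\<in>Q. \<forall>\<xi>\<in>A. \<forall>\<eta>\<in>A. \<phi> \<xi> = \<phi> \<eta>" using Q unfolding adapted_partition_def by blast
    ultimately have "c A = \<phi> \<xi>" "c B = \<phi> \<xi>" using that x unfolding c_def by metis+
    then show ?thesis by simp
  qed
  have fin: "finite P0" "finite Q" "P0 \<subseteq> alg" "Q \<subseteq> alg" using P0 Q unfolding adapted_partition_def by auto
  have "(\<Sum>A\<in>P0. c A * \<nu> A) = (\<Sum>A\<in>P0. \<Sum>B\<in>Q. c A * \<nu> (A \<inter> B))"
    using split[OF Q] fin(3) by (simp add: sum_distrib_left subset_iff)
  also have "\<dots> = (\<Sum>A\<in>P0. \<Sum>B\<in>Q. c B * \<nu> (A \<inter> B))"
    using cc by (intro sum.cong refl) auto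
  also have "\<dots> = (\<Sum>B\<in>Q. \<Sum>A\<in>P0. c B * \<nu> (A \<inter> B))" by (rule sum.swap)
  also have "\<dots> = (\<Sum>B\<in>Q. c B * \<nu> B)"
  proof (intro sum.cong refl)
    fix B assume "B \<in> Q"
    then have "\<nu> B = (\<Sum>A\<in>P0. \<nu> (B \<inter> A))" using split[OF P0] fin(4) by blast
    then show "(\<Sum>A\<in>P0. c B * \<nu> (A \<inter> B)) = c B * \<nu> B" by (simp add: sum_distrib_left Int_commute)
  qed
  finally show ?thesis using dI unfolding c_def by simp
qed

end



lemma path_drop: "is_path E xs \<Longrightarrow> n < length xs \<Longrightarrow> is_path E (drop n xs)"
  unfolding is_path_def by auto

lemma zip_snoc_tl: "xs \<noteq> [] \<Longrightarrow> zip (xs @ [y]) (tl xs @ [y]) = zip xs (tl xs) @ [(last xs, y)]"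
proof (induction xs)
  case Nil then show ?case by simp
next
  case (Cons a xs) then show ?case by (cases xs) auto
qed

context tr begin

lemma path_rev: assumes "is_path E xs" shows "is_path E (rev xs)"
  unfolding is_path_def
proof (intro conjI allI impI)
  show "rev xs \<noteq> []" "distinct (rev xs)" using assms unfolding is_path_def by auto
  fix i assume i: "Suc i < length (rev xs)"
  define j where "j = length xs - Suc (Suc i)"
  have j: "Suc j < length xs" "length xs - Suc i = Suc j" "length xs - Suc (Suc i) = j" using i unfolding j_def by auto
  have "E (xs ! j) (xs ! Suc j)" using assms j unfolding is_path_def by blast
  then show "E (rev xs ! i) (rev xs ! Suc i)" using i j by (simp add: rev_nth Esym)
qed

lemma geod_anc: assumes "i < length (P x)" shows "geod E x (P x ! i) = rev (drop i (P x))"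
proof (rule geod_unique)
  show "is_path E (rev (drop i (P x)))" using path_rev path_drop P_path assms by blast
  show "hd (rev (drop i (P x))) = x" using assms P_last by (simp add: hd_rev)
  show "last (rev (drop i (P x))) = P x ! i" using assms by (simp add: last_rev hd_drop_conv_nth)
qed

lemma fext_refl: "fext E f x x = 1" unfolding fext_def by (simp add: geod_refl)

lemma fext_edge: "E x y \<Longrightarrow> fext E f x y = f x y" unfolding fext_def by (simp add: geod_edge)

lemma fext_child_r: assumes "y \<noteq> r" "pv y = x" shows "fext E f r y = fext E f r x * f x y"
proof -
  have "P y = P x @ [y]" using child_P assms by blast
  then have "zip (P y) (tl (P y)) = zip (P x) (tl (P x)) @ [(x, y)]"
    using zip_snoc_tl[OF P_ne[of x], of y] P_last[of x] P_ne[of x] by simp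
  then show ?thesis unfolding fext_def Let_def by simp
qed

lemma fext_child_anc: assumes "y \<noteq> r" "pv y = x" "v \<in> set (P x)"
  shows "fext E f y v = f y x * fext E f x v"
proof -
  have py: "P y = P x @ [y]" using child_P assms by blast
  obtain i where i: "i < length (P x)" "v = P x ! i" using assms(3) by (metis in_set_conv_nth)
  have "v = P y ! i" using i py by (simp add: nth_append)
  moreover have "i < length (P y)" using i py by simp
  ultimately have gy: "geod E y v = rev (drop i (P y))" using geod_anc by metis
  have gx: "geod E x v = rev (drop i (P x))" using geod_anc i by metis
  have "geod E y v = y # geod E x v" using gy gx py i by simp
  moreover have "geod E x v \<noteq> []" "hd (geod E x v) = x" using geod_prop geod_ne by auto
  ultimately show ?thesis unfolding fext_def Let_def
    by (cases "geod E x v") auto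
qed

lemma fext_nz: assumes "\<forall>a b. E a b \<longrightarrow> f a b \<noteq> 0" shows "fext E f r x \<noteq> 0"
proof (induction x rule: measure_induct_rule[of "\<lambda>x. length (P x)"])
  case (less x)
  show ?case
  proof (cases "x = r")
    case True then show ?thesis by (simp add: fext_refl)
  next
    case False
    have "fext E f r x = fext E f r (pv x) * f (pv x) x" using fext_child_r False by blast
    moreover have "fext E f r (pv x) \<noteq> 0" using less pv_facts(3)[OF False] by simp
    moreover have "f (pv x) x \<noteq> 0" using assms P_pred(2)[OF False] by blast
    ultimately show ?thesis by simp
  qed
qed

subsection \<open>Atoms\<close>

definition atom :: "'a set \<Rightarrow> 'a \<Rightarrow> (nat \<Rightarrow> 'a) set set" where
  "atom V v = bd v - (\<Union>c\<in>V \<inter> children E r v. bd c)"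

definition good :: "'a set \<Rightarrow> bool" where
  "good V \<longleftrightarrow> finite V \<and> r \<in> V \<and> (\<forall>v\<in>V. set (P v) \<subseteq> V)"

lemma good_P: "good (set (P x))" unfolding good_def using r_in_P anc_sub by auto

lemma good_Un: "good V \<Longrightarrow> good W \<Longrightarrow> good (V \<union> W)" unfolding good_def by auto

lemma atom_basic: "finite V \<Longrightarrow> atom V v \<in> basic_sets E r"
  unfolding atom_def by (rule basic_memI) auto

lemma atom_sub: "atom V v \<subseteq> bd v" unfolding atom_def by blast

lemma atom_cover: assumes g: "good V" and xi: "\<xi> \<in> ends E" shows "\<exists>v\<in>V. \<xi> \<in> atom V v"
proof -
  define W where "W = {v\<in>V. \<xi> \<in> bd v}"
  have "r \<in> W" using g xi bdT_r unfolding W_def good_def by auto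
  moreover have fW: "finite W" using g unfolding W_def good_def by auto
  ultimately have ne: "(\<lambda>v. length (P v)) ` W \<noteq> {}" "finite ((\<lambda>v. length (P v)) ` W)" by auto
  define n where "n = Max ((\<lambda>v. length (P v)) ` W)"
  obtain v where v: "v \<in> W" "length (P v) = n" using Max_in[OF ne(2,1)] unfolding n_def by auto
  have "\<xi> \<notin> bd c" if "c \<in> V \<inter> children E r v" for c
  proof
    assume "\<xi> \<in> bd c"
    then have "c \<in> W" using that unfolding W_def by auto
    then have "length (P c) \<le> n" unfolding n_def using fW by auto
    moreover have "length (P c) = Suc (length (P v))" using that child_P(4) unfolding children_def by auto
    ultimately show False using v by simp
  qed
  then have "\<xi> \<in> atom V v" using v unfolding atom_def W_def by auto
  then show ?thesis using v unfolding W_def by auto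
qed

lemma atom_disj_aux: assumes g: "good V" and "w \<in> V" "v \<in> set (P w)" "v \<noteq> w"
  shows "atom V v \<inter> atom V w = {}"
proof -
  obtain z where z: "z \<in> set (P w)" "z \<noteq> r" "pv z = v" using child_on_path assms(3,4) by blast
  have "z \<in> V" using g assms(2) z(1) unfolding good_def by blast
  then have "z \<in> V \<inter> children E r v" using z unfolding children_def by auto
  then have "atom V v \<inter> bd z = {}" unfolding atom_def by blast
  moreover have "atom V w \<subseteq> bd z" using atom_sub bdT_mono z(1) by blast
  ultimately show ?thesis by blast
qed

lemma atom_disj: assumes g: "good V" and "v \<in> V" "w \<in> V" "v \<noteq> w"
  shows "atom V v \<inter> atom V w = {}"
proof -
  consider "v \<in> set (P w)" | "w \<in> set (P v)" | "v \<notin> set (P w) \<and> w \<notin> set (P v)" by blast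
  then show ?thesis
  proof cases
    case 1 then show ?thesis using atom_disj_aux assms by blast
  next
    case 2 then show ?thesis using atom_disj_aux[of V v w] assms by blast
  next
    case 3 then show ?thesis using bdT_disj atom_sub by blast
  qed
qed

lemma children_in_V_sub: "bd c \<subseteq> bd v" if "c \<in> children E r v" for c v
  using that bdT_mono child_P(5) unfolding children_def by blast

lemma dist_atom: assumes d: "is_distribution E r \<nu>" and fin: "finite V"
  shows "\<nu> (bd v) = \<nu> (atom V v) + (\<Sum>c\<in>V \<inter> children E r v. \<nu> (bd c))"
proof -
  let ?C = "V \<inter> children E r v"
  have fC: "finite ?C" using fin by simp
  have dj: "\<forall>i\<in>?C. \<forall>j\<in>?C. i \<noteq> j \<longrightarrow> bd i \<inter> bd j = {}"
    using children_disj unfolding children_def by blast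
  have U: "(\<Union>c\<in>?C. bd c) \<in> alg \<and> \<nu> (\<Union>c\<in>?C. bd c) = (\<Sum>c\<in>?C. \<nu> (bd c))"
    by (rule dist_finsum'[OF d fC]) (use dj bdT_alg in auto)
  have e: "bd v = atom V v \<union> (\<Union>c\<in>?C. bd c)" unfolding atom_def using children_in_V_sub by blast
  have "atom V v \<inter> (\<Union>c\<in>?C. bd c) = {}" unfolding atom_def by blast
  then have "\<nu> (atom V v \<union> (\<Union>c\<in>?C. bd c)) = \<nu> (atom V v) + \<nu> (\<Union>c\<in>?C. bd c)"
    using dist_add[OF d basic_alg[OF atom_basic[OF fin]]] U by blast
  then show ?thesis using e U by simp
qed

lemma no_child_in_P: "P x' \<noteq> [] \<Longrightarrow> set (P y) \<inter> children E r y = {}"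
proof -
  have "c \<notin> set (P y)" if "c \<in> children E r y" for c
  proof
    assume "c \<in> set (P y)"
    then have "length (P c) \<le> length (P y)" by (rule anc_len)
    moreover have "length (P c) = Suc (length (P y))" using that child_P(4) unfolding children_def by auto
    ultimately show False by simp
  qed
  then show ?thesis by blast
qed

lemma confl: assumes v: "v \<in> set (P x)" and xi: "\<xi> \<in> atom (set (P x)) v"
  shows "confl_end E r x \<xi> = v"
proof -
  obtain i where i: "i < length (P x)" "v = P x ! i" "P v = take (Suc i) (P x)" using P_anc v by blast
  have all: "\<xi> \<in> bd u" if "u \<in> set (take (Suc i) (P x))" for u
    using that i(3) bdT_mono atom_sub xi by (metis subsetD)
  have rest: "takeWhile (\<lambda>u. \<xi> \<in> bd u) (drop (Suc i) (P x)) = []"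
  proof (cases "Suc i < length (P x)")
    case False then show ?thesis by simp
  next
    case True
    define z where "z = P x ! Suc i"
    have pz: "P z = P v @ [z]" using P_take[OF True] i True unfolding z_def by (simp add: take_Suc_conv_app_nth)
    have "pv z = v" unfolding pred_v_def using pz P_last by simp
    moreover have "z \<noteq> r"
    proof
      assume "z = r"
      then have "P z = [r]" using P_r by simp
      with pz P_ne[of v] show False by (cases "P v") auto
    qed
    moreover have "z \<in> set (P x)" using True unfolding z_def by simp
    ultimately have "\<xi> \<notin> bd z" using xi unfolding atom_def children_def by blast
    moreover have "drop (Suc i) (P x) = z # drop (Suc (Suc i)) (P x)"
      using True unfolding z_def by (simp add: Cons_nth_drop_Suc)
    ultimately show ?thesis by simp
  qed
  have "takeWhile (\<lambda>u. \<xi> \<in> bd u) (P x) = take (Suc i) (P x)"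
  proof -
    have "P x = take (Suc i) (P x) @ drop (Suc i) (P x)" by simp
    then have "takeWhile (\<lambda>u. \<xi> \<in> bd u) (P x) = take (Suc i) (P x) @ takeWhile (\<lambda>u. \<xi> \<in> bd u) (drop (Suc i) (P x))"
      using takeWhile_append2[of "take (Suc i) (P x)" "\<lambda>u. \<xi> \<in> bd u" "drop (Suc i) (P x)"] all by metis
    then show ?thesis using rest by simp
  qed
  then show ?thesis unfolding confl_end_def using i by (simp add: take_Suc_conv_app_nth)
qed

definition kk :: "('a \<Rightarrow> 'a \<Rightarrow> complex) \<Rightarrow> 'a \<Rightarrow> 'a \<Rightarrow> complex" where
  "kk f x v = fext E f x v / fext E f r v"

lemma integral_kernel: assumes d: "is_distribution E r \<nu>"
  shows "dist_integral E r \<nu> (kernel E r f x) = (\<Sum>v\<in>set (P x). kk f x v * \<nu> (atom (set (P x)) v))"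
proof -
  let ?V = "set (P x)"
  let ?Q = "atom ?V ` ?V"
  have g: "good ?V" by (rule good_P)
  have kc: "kernel E r f x \<xi> = kk f x v" if "v \<in> ?V" "\<xi> \<in> atom ?V v" for v \<xi>
    unfolding kernel_def kk_def using confl[OF that] by simp
  have ap: "adapted_partition E r (kernel E r f x) ?Q"
    unfolding adapted_partition_def
  proof (intro conjI)
    show "finite ?Q" by simp
    show "?Q \<subseteq> alg" using atom_basic basic_alg by blast
    show "pairwise disjnt ?Q" unfolding pairwise_def disjnt_def using atom_disj[OF g] by fastforce
    show "\<Union>?Q = ends E" using atom_cover[OF g] atom_sub bdT_ends by blast
    show "\<forall>A\<in>?Q. \<forall>\<xi>\<in>A. \<forall>\<eta>\<in>A. kernel E r f x \<xi> = kernel E r f x \<eta>" using kc by auto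
  qed
  have "dist_integral E r \<nu> (kernel E r f x) = (\<Sum>B\<in>?Q. kernel E r f x (SOME \<xi>. \<xi> \<in> B) * \<nu> B)"
    using integral_eq[OF d ap] .
  also have "\<dots> = (\<Sum>v\<in>?V. kernel E r f x (SOME \<xi>. \<xi> \<in> atom ?V v) * \<nu> (atom ?V v))"
  proof (subst sum.reindex_nontrivial)
    show "finite ?V" by simp
    fix v w assume "v \<in> ?V" "w \<in> ?V" "v \<noteq> w" "atom ?V v = atom ?V w"
    then have "atom ?V v = {}" using atom_disj[OF g] by blast
    then show "kernel E r f x (SOME \<xi>. \<xi> \<in> atom ?V v) * \<nu> (atom ?V v) = 0" using dist_empty[OF d] by simp
  qed simp
  also have "\<dots> = (\<Sum>v\<in>?V. kk f x v * \<nu> (atom ?V v))"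
  proof (intro sum.cong refl)
    fix v assume v: "v \<in> ?V"
    show "kernel E r f x (SOME \<xi>. \<xi> \<in> atom ?V v) * \<nu> (atom ?V v) = kk f x v * \<nu> (atom ?V v)"
    proof (cases "atom ?V v = {}")
      case True then show ?thesis using dist_empty[OF d] by simp
    next
      case False
      then have "(SOME \<xi>. \<xi> \<in> atom ?V v) \<in> atom ?V v" by (simp add: some_in_eq)
      then show ?thesis using kc v by simp
    qed
  qed
  finally show ?thesis .
qed

definition GG :: "('a \<Rightarrow> 'a \<Rightarrow> complex) \<Rightarrow> ('a \<Rightarrow> complex) \<Rightarrow> 'a \<Rightarrow> complex" where
  "GG f \<mu> x = (\<Sum>v\<in>set (P x). kk f x v * (\<mu> v - (\<Sum>c\<in>set (P x) \<inter> children E r v. \<mu> c)))"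

lemma integral_GG: assumes d: "is_distribution E r \<nu>"
  shows "dist_integral E r \<nu> (kernel E r f x) = GG f (\<lambda>v. \<nu> (bd v)) x"
  unfolding integral_kernel[OF d] GG_def
proof (intro sum.cong refl)
  fix v
  have "\<nu> (bd v) = \<nu> (atom (set (P x)) v) + (\<Sum>c\<in>set (P x) \<inter> children E r v. \<nu> (bd c))"
    by (rule dist_atom[OF d]) simp
  then have "\<nu> (atom (set (P x)) v) = \<nu> (bd v) - (\<Sum>c\<in>set (P x) \<inter> children E r v. \<nu> (bd c))"
    by (metis add_diff_cancel_right')
  then show "kk f x v * \<nu> (atom (set (P x)) v) =
     kk f x v * (\<nu> (bd v) - (\<Sum>c\<in>set (P x) \<inter> children E r v. \<nu> (bd c)))" by (simp only:)
qed

lemma GG_r: "GG f \<mu> r = \<mu> r"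
proof -
  have "{r} \<inter> children E r r = {}" unfolding children_def by auto
  then show ?thesis unfolding GG_def kk_def using P_r by (simp add: fext_refl)
qed

lemma GG_child: assumes y: "y \<noteq> r" "pv y = x"
  shows "GG f \<mu> y = f y x * GG f \<mu> x + \<mu> y * (1 / fext E f r y - f y x / fext E f r x)"
proof -
  let ?Vx = "set (P x)" and ?Vy = "set (P y)"
  have Vy: "?Vy = insert y ?Vx" "y \<notin> ?Vx" using child_P[OF y] by auto
  have ny: "?Vy \<inter> children E r y = {}" using no_child_in_P[OF P_ne] by blast
  have ch: "?Vy \<inter> children E r v = (if v = x then insert y (?Vx \<inter> children E r v) else ?Vx \<inter> children E r v)" for v
    using Vy y unfolding children_def by auto
  have S: "(\<Sum>c\<in>?Vy \<inter> children E r v. \<mu> c) = (\<Sum>c\<in>?Vx \<inter> children E r v. \<mu> c) + (if v = x then \<mu> y else 0)" for v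
    using ch[of v] Vy(2) by (simp add: add.commute)
  have kky: "kk f y v = f y x * kk f x v" if "v \<in> ?Vx" for v
    unfolding kk_def using fext_child_anc[OF y that] by simp
  have "GG f \<mu> y = kk f y y * (\<mu> y - 0) + (\<Sum>v\<in>?Vx. kk f y v * (\<mu> v - (\<Sum>c\<in>?Vy \<inter> children E r v. \<mu> c)))"
    unfolding GG_def using Vy ny by simp
  also have "(\<Sum>v\<in>?Vx. kk f y v * (\<mu> v - (\<Sum>c\<in>?Vy \<inter> children E r v. \<mu> c)))
      = (\<Sum>v\<in>?Vx. f y x * (kk f x v * (\<mu> v - (\<Sum>c\<in>?Vx \<inter> children E r v. \<mu> c))) - (if v = x then f y x * kk f x x * \<mu> y else 0))"
    using kky S by (intro sum.cong refl) (auto simp: algebra_simps)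
  also have "\<dots> = f y x * GG f \<mu> x - f y x * kk f x x * \<mu> y"
    unfolding GG_def using x_in_P[of x] by (simp add: sum_subtractf sum_distrib_left)
  finally show ?thesis unfolding kk_def by (simp add: fext_refl field_simps)
qed

end



locale trm = tr +
  fixes m :: "'a \<Rightarrow> complex"
  assumes flow: "\<And>x. (m has_sum m x) (children E r x)"
begin

definition tm :: "'a set \<Rightarrow> 'a \<Rightarrow> complex" where
  "tm V v = m v - (\<Sum>c\<in>V \<inter> children E r v. m c)"

definition val :: "'a set \<Rightarrow> (nat \<Rightarrow> 'a) set set \<Rightarrow> complex" where
  "val V A = (\<Sum>v\<in>V. if atom V v \<subseteq> A then tm V v else 0)"

definition adeq :: "'a set \<Rightarrow> (nat \<Rightarrow> 'a) set set \<Rightarrow> bool" where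
  "adeq V A \<longleftrightarrow> A \<subseteq> ends E \<and> (\<forall>v\<in>V. atom V v \<subseteq> A \<or> atom V v \<inter> A = {})"

definition nu :: "(nat \<Rightarrow> 'a) set set \<Rightarrow> complex" where
  "nu A = val (SOME V. good V \<and> adeq V A) A"

lemma child_notin_atom: assumes "c \<in> children E r v" "c \<notin> V" shows "bd c \<subseteq> atom V v"
proof -
  have "bd c \<inter> bd c' = {}" if "c' \<in> V \<inter> children E r v" for c'
    using children_disj that assms unfolding children_def by blast
  then show ?thesis unfolding atom_def using children_in_V_sub[OF assms(1)] by blast
qed

lemma empty_atom: assumes g: "good V" and e: "atom V v = {}" shows "tm V v = 0"
proof -
  have sub: "children E r v \<subseteq> V"
  proof
    fix c assume c: "c \<in> children E r v"
    show "c \<in> V"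
    proof (rule ccontr)
      assume "c \<notin> V"
      then have "bd c \<subseteq> atom V v" using child_notin_atom c by blast
      then show False using e bdT_ne by blast
    qed
  qed
  then have eq: "V \<inter> children E r v = children E r v" by blast
  have fin: "finite (children E r v)" using sub g finite_subset unfolding good_def by blast
  have "m v = (\<Sum>c\<in>children E r v. m c)"
    using has_sum_unique[OF flow[of v] has_sum_finite[OF fin]] .
  then show ?thesis unfolding tm_def eq by simp
qed

lemma step:
  assumes g: "good V" and w: "w \<notin> V" "w \<noteq> r" "pv w \<in> V" and ad: "adeq V A"
  shows "good (insert w V) \<and> adeq (insert w V) A \<and> val (insert w V) A = val V A"
proof -
  define p where "p = pv w"
  define V' where "V' = insert w V"
  have wc: "w \<in> children E r p" unfolding children_def p_def using w by simp
  have g': "good V'"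
  proof -
    have "set (P w) \<subseteq> V'" using P_pred(1)[OF w(2)] g w(3) unfolding V'_def good_def by auto
    then show ?thesis using g unfolding good_def V'_def by auto
  qed
  have ch1: "V' \<inter> children E r v = V \<inter> children E r v" if "v \<noteq> p" for v
    using that unfolding V'_def children_def p_def by auto
  have ch2: "V' \<inter> children E r p = insert w (V \<inter> children E r p)"
    using wc unfolding V'_def by auto
  have ch3: "V' \<inter> children E r w = {}"
  proof -
    have "c \<notin> V'" if "c \<in> children E r w" for c
    proof
      assume "c \<in> V'"
      have cr: "c \<noteq> r" "pv c = w" using that unfolding children_def by auto
      show False
      proof (cases "c = w")
        case True then show False using cr pv_facts(2)[OF w(2)] by simp
      next
        case False
        then have "c \<in> V" using \<open>c \<in> V'\<close> unfolding V'_def by simp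
        then have "w \<in> V" using g child_P(5)[OF cr] unfolding good_def by blast
        then show False using w by simp
      qed
    qed
    then show ?thesis by blast
  qed
  have a1: "atom V' v = atom V v" "tm V' v = tm V v" if "v \<noteq> p" for v
    unfolding atom_def tm_def using ch1[OF that] by simp_all
  have a2: "atom V' p = atom V p - bd w" "tm V' p = tm V p - m w"
    unfolding atom_def tm_def ch2 using w(1) g unfolding good_def by (auto simp: finite_subset)
  have a3: "atom V' w = bd w" "tm V' w = m w" unfolding atom_def tm_def ch3 by simp_all
  have a4: "bd w \<subseteq> atom V p" using child_notin_atom[OF wc w(1)] .
  have pw: "p \<noteq> w" unfolding p_def using pv_facts(2)[OF w(2)] .
  have pV: "p \<in> V" unfolding p_def using w(3) .
  have adp: "atom V p \<subseteq> A \<or> atom V p \<inter> A = {}" using ad pV unfolding adeq_def by blast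
  have ad': "adeq V' A" unfolding adeq_def
  proof (intro conjI ballI)
    show "A \<subseteq> ends E" using ad unfolding adeq_def by blast
    fix u assume u: "u \<in> V'"
    show "atom V' u \<subseteq> A \<or> atom V' u \<inter> A = {}"
    proof (cases "u = w")
      case True then show ?thesis using a3 a4 adp by blast
    next
      case False
      then have uV: "u \<in> V" using u unfolding V'_def by simp
      show ?thesis
      proof (cases "u = p")
        case True then show ?thesis using a2 adp by blast
      next
        case False then show ?thesis using a1[OF False] ad uV unfolding adeq_def by simp
      qed
    qed
  qed
  define T where "T u = (if atom V u \<subseteq> A then tm V u else 0)" for u
  define T' where "T' u = (if atom V' u \<subseteq> A then tm V' u else 0)" for u
  have fV: "finite V" using g unfolding good_def by simp
  have "val V' A = T' w + (\<Sum>u\<in>V. T' u)"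
    unfolding val_def T'_def V'_def using fV w(1) by (simp add: V'_def)
  also have "(\<Sum>u\<in>V. T' u) = T' p + (\<Sum>u\<in>V - {p}. T' u)" using fV pV by (simp add: sum.remove)
  also have "(\<Sum>u\<in>V - {p}. T' u) = (\<Sum>u\<in>V - {p}. T u)"
    unfolding T_def T'_def using a1 by (intro sum.cong refl) auto
  also have "T' w + (T' p + (\<Sum>u\<in>V - {p}. T u)) = (T' w + T' p) + (\<Sum>u\<in>V - {p}. T u)" by simp
  also have "T' w + T' p = T p"
  proof (cases "atom V p \<subseteq> A")
    case True
    then show ?thesis unfolding T_def T'_def using a2 a3 a4 by auto
  next
    case False
    then have dis: "atom V p \<inter> A = {}" using adp by blast
    have "\<not> bd w \<subseteq> A" using a4 dis bdT_ne[of w] by blast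
    then have tw: "T' w = 0" unfolding T'_def using a3 by simp
    have tp: "T' p = 0"
    proof (cases "atom V' p \<subseteq> A")
      case True
      then have "atom V' p = {}" using a2 dis by blast
      then show ?thesis unfolding T'_def using empty_atom[OF g'] by simp
    next
      case False then show ?thesis unfolding T'_def by simp
    qed
    show ?thesis using tw tp False unfolding T_def by simp
  qed
  also have "T p + (\<Sum>u\<in>V - {p}. T u) = val V A"
    unfolding val_def T_def[symmetric] using fV pV by (simp add: sum.remove)
  finally show ?thesis using g' ad' unfolding V'_def by blast
qed

lemma refine_aux:
  "\<forall>V. good V \<and> good V' \<and> V \<subseteq> V' \<and> adeq V A \<and> card (V' - V) = n \<longrightarrow> adeq V' A \<and> val V' A = val V A"
proof (induction n)
  case 0
  show ?case
  proof (intro allI impI)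
    fix V assume a: "good V \<and> good V' \<and> V \<subseteq> V' \<and> adeq V A \<and> card (V' - V) = 0"
    then have "finite (V' - V)" unfolding good_def by auto
    then have "V' = V" using a by auto
    then show "adeq V' A \<and> val V' A = val V A" using a by simp
  qed
next
  case (Suc n)
  show ?case
  proof (intro allI impI)
    fix V assume a: "good V \<and> good V' \<and> V \<subseteq> V' \<and> adeq V A \<and> card (V' - V) = Suc n"
    have fD: "finite (V' - V)" using a unfolding good_def by auto
    have ne: "V' - V \<noteq> {}" using a by auto
    define k where "k = Min ((\<lambda>u. length (P u)) ` (V' - V))"
    have "k \<in> (\<lambda>u. length (P u)) ` (V' - V)" unfolding k_def using fD ne by (intro Min_in) auto
    then obtain w where w: "w \<in> V' - V" "length (P w) = k" by (metis (no_types, lifting) imageE)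
    have kmin: "k \<le> length (P u)" if "u \<in> V' - V" for u
      unfolding k_def using fD that by simp
    have wr: "w \<noteq> r" using w a unfolding good_def by auto
    have pV': "pv w \<in> V'" using a w pv_facts(1)[OF wr] unfolding good_def by blast
    have pV: "pv w \<in> V"
    proof (rule ccontr)
      assume "pv w \<notin> V"
      then have "k \<le> length (P (pv w))" using kmin pV' by blast
      then show False using w pv_facts(3)[OF wr] by simp
    qed
    have st: "good (insert w V) \<and> adeq (insert w V) A \<and> val (insert w V) A = val V A"
      using step[of V w A] a w wr pV by blast
    have "card (V' - insert w V) = n"
    proof -
      have "V' - insert w V = (V' - V) - {w}" by blast
      then show ?thesis using a w fD by simp
    qed
    moreover have "insert w V \<subseteq> V'" using a w by blast
    ultimately have "adeq V' A \<and> val V' A = val (insert w V) A"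
      using Suc.IH st a by blast
    then show "adeq V' A \<and> val V' A = val V A" using st by simp
  qed
qed

lemma refine: "good V \<Longrightarrow> good V' \<Longrightarrow> V \<subseteq> V' \<Longrightarrow> adeq V A \<Longrightarrow> adeq V' A \<and> val V' A = val V A"
  using refine_aux by blast

lemma adeq_basic:
  assumes g: "good V" and x: "x \<in> V" and S: "S \<subseteq> V" "S \<subseteq> children E r x"
  shows "adeq V (bd x - (\<Union>s\<in>S. bd s))"
  unfolding adeq_def
proof (intro conjI ballI)
  let ?C = "bd x - (\<Union>s\<in>S. bd s)"
  show "?C \<subseteq> ends E" using bdT_ends by blast
  fix v assume v: "v \<in> V"
  consider "v = x" | "x \<in> set (P v)" "v \<noteq> x" | "v \<in> set (P x)" "v \<noteq> x" | "x \<notin> set (P v)" "v \<notin> set (P x)"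
    by blast
  then show "atom V v \<subseteq> ?C \<or> atom V v \<inter> ?C = {}"
  proof cases
    case 1
    then have "atom V v \<subseteq> ?C" unfolding atom_def using S by blast
    then show ?thesis by blast
  next
    case 2
    obtain z where z: "z \<in> set (P v)" "z \<noteq> r" "pv z = x" using child_on_path 2 by metis
    have vz: "atom V v \<subseteq> bd z" using atom_sub bdT_mono z(1) by blast
    show ?thesis
    proof (cases "z \<in> S")
      case True
      then show ?thesis using vz by blast
    next
      case False
      have "bd z \<inter> bd s = {}" if "s \<in> S" for s
        using children_disj[OF z(2,3)] that S(2) False unfolding children_def by force
      moreover have "bd z \<subseteq> bd x" using bdT_mono child_P(5)[OF z(2,3)] by blast
      ultimately show ?thesis using vz by blast
    qed
  next
    case 3
    obtain z where z: "z \<in> set (P x)" "z \<noteq> r" "pv z = v" using child_on_path 3 by metis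
    have "z \<in> V" using g x z(1) unfolding good_def by blast
    then have "atom V v \<inter> bd z = {}" unfolding atom_def children_def using z by blast
    moreover have "bd x \<subseteq> bd z" using bdT_mono z(1) by blast
    ultimately show ?thesis by blast
  next
    case 4
    then show ?thesis using bdT_disj[OF 4(2,1)] atom_sub by blast
  qed
qed

lemma adeq_exists: assumes A: "A \<in> alg" shows "\<exists>V. good V \<and> adeq V A"
proof -
  obtain F where F: "A = \<Union>F" "finite F" "F \<subseteq> basic_sets E r" "pairwise disjnt F"
    using A by (rule algE)
  have "\<forall>C\<in>F. \<exists>x S. C = bd x - (\<Union>s\<in>S. bd s) \<and> finite S \<and> S \<subseteq> children E r x"
    using F(3) unfolding basic_sets_def by blast
  then obtain X SS where XS: "\<forall>C\<in>F. C = bd (X C) - (\<Union>s\<in>SS C. bd s) \<and> finite (SS C) \<and> SS C \<subseteq> children E r (X C)"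
    by metis
  define V where "V = {r} \<union> (\<Union>C\<in>F. set (P (X C)) \<union> (\<Union>s\<in>SS C. set (P s)))"
  have g: "good V" unfolding good_def V_def
  proof (intro conjI)
    show "finite ({r} \<union> (\<Union>C\<in>F. set (P (X C)) \<union> (\<Union>s\<in>SS C. set (P s))))" using F(2) XS by auto
    show "r \<in> {r} \<union> (\<Union>C\<in>F. set (P (X C)) \<union> (\<Union>s\<in>SS C. set (P s)))" by simp
    show "\<forall>v\<in>{r} \<union> (\<Union>C\<in>F. set (P (X C)) \<union> (\<Union>s\<in>SS C. set (P s))).
            set (P v) \<subseteq> {r} \<union> (\<Union>C\<in>F. set (P (X C)) \<union> (\<Union>s\<in>SS C. set (P s)))"
      using anc_sub P_r by fastforce
  qed
  have adC: "adeq V C" if "C \<in> F" for C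
  proof -
    have "X C \<in> V" unfolding V_def using that x_in_P by blast
    moreover have "SS C \<subseteq> V" unfolding V_def using that x_in_P by blast
    ultimately have "adeq V (bd (X C) - (\<Union>s\<in>SS C. bd s))" using adeq_basic g XS that by blast
    then show ?thesis using XS that by metis
  qed
  have "adeq V A" unfolding adeq_def
  proof (intro conjI ballI)
    show "A \<subseteq> ends E" using alg_sub_ends A by blast
    fix v assume v: "v \<in> V"
    show "atom V v \<subseteq> A \<or> atom V v \<inter> A = {}"
    proof (cases "atom V v \<inter> A = {}")
      case False
      then obtain C where C: "C \<in> F" "atom V v \<inter> C \<noteq> {}" using F(1) by blast
      then have "atom V v \<subseteq> C" using adC[OF C(1)] v unfolding adeq_def by blast
      then show ?thesis using C F(1) by blast
    qed simp
  qed
  then show ?thesis using g by blast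
qed

lemma nu_val: assumes g: "good V" and ad: "adeq V A" shows "nu A = val V A"
proof -
  define V0 where "V0 = (SOME V. good V \<and> adeq V A)"
  have "good V0 \<and> adeq V0 A" unfolding V0_def using g ad by (metis (mono_tags, lifting) someI)
  then have g0: "good V0" "adeq V0 A" by auto
  have gu: "good (V0 \<union> V)" using good_Un g0 g by blast
  have "val (V0 \<union> V) A = val V0 A" using refine[OF g0(1) gu _ g0(2)] by blast
  moreover have "val (V0 \<union> V) A = val V A" using refine[OF g gu _ ad] by blast
  ultimately show ?thesis unfolding nu_def V0_def[symmetric] by simp
qed

lemma val_add: assumes g: "good V" and a: "adeq V A" "adeq V B" and d: "A \<inter> B = {}"
  shows "adeq V (A \<union> B) \<and> val V (A \<union> B) = val V A + val V B"
proof
  show "adeq V (A \<union> B)" using a unfolding adeq_def by blast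
  show "val V (A \<union> B) = val V A + val V B"
    unfolding val_def sum.distrib[symmetric]
  proof (intro sum.cong refl)
    fix v assume v: "v \<in> V"
    show "(if atom V v \<subseteq> A \<union> B then tm V v else 0) =
          (if atom V v \<subseteq> A then tm V v else 0) + (if atom V v \<subseteq> B then tm V v else 0)"
    proof (cases "atom V v = {}")
      case True then show ?thesis using empty_atom[OF g] by simp
    next
      case False
      have "atom V v \<subseteq> A \<or> atom V v \<inter> A = {}" "atom V v \<subseteq> B \<or> atom V v \<inter> B = {}"
        using a v unfolding adeq_def by blast+
      note h = this
      show ?thesis
      proof (cases "atom V v \<subseteq> A")
        case True
        then have "\<not> atom V v \<subseteq> B" using False d by blast
        moreover have "atom V v \<subseteq> A \<union> B" using True by blast
        ultimately show ?thesis using True by simp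
      next
        case nA: False
        show ?thesis
        proof (cases "atom V v \<subseteq> B")
          case True
          moreover have "atom V v \<subseteq> A \<union> B" using True by blast
          ultimately show ?thesis using nA by simp
        next
          case nB: False
          then have "atom V v \<inter> A = {}" "atom V v \<inter> B = {}" using h nA by auto
          then have "\<not> atom V v \<subseteq> A \<union> B" using False by blast
          then show ?thesis using nA nB by simp
        qed
      qed
    qed
  qed
qed

lemma nu_dist: "is_distribution E r nu"
  unfolding is_distribution_def
proof (intro ballI impI)
  fix A B assume A: "A \<in> alg" and B: "B \<in> alg" and d: "A \<inter> B = {}"
  obtain VA where VA: "good VA" "adeq VA A" using adeq_exists[OF A] by blast
  obtain VB where VB: "good VB" "adeq VB B" using adeq_exists[OF B] by blast
  have g: "good (VA \<union> VB)" using good_Un VA VB by blast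
  have aA: "adeq (VA \<union> VB) A" using refine[OF VA(1) g _ VA(2)] by blast
  have aB: "adeq (VA \<union> VB) B" using refine[OF VB(1) g _ VB(2)] by blast
  have va: "adeq (VA \<union> VB) (A \<union> B) \<and> val (VA \<union> VB) (A \<union> B) = val (VA \<union> VB) A + val (VA \<union> VB) B"
    using val_add[OF g aA aB d] .
  show "nu (A \<union> B) = nu A + nu B"
    using nu_val[OF g aA] nu_val[OF g aB] nu_val[OF g] va by simp
qed

lemma nu_bd: "nu (bd x) = m x"
proof -
  let ?V = "set (P x)"
  define T where "T v = (if atom ?V v \<subseteq> bd x then tm ?V v else 0)" for v
  have g: "good ?V" by (rule good_P)
  have ad: "adeq ?V (bd x)" using adeq_basic[OF g x_in_P, of "{}"] by simp
  have e: "set (P x) \<inter> children E r x = {}" using no_child_in_P[OF P_ne] by blast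
  have ax: "atom ?V x = bd x" unfolding atom_def e by simp
  have tx: "tm ?V x = m x" unfolding tm_def e by simp
  have Tx: "T x = m x" unfolding T_def using ax tx by simp
  have oth: "T v = 0" if v: "v \<in> ?V" "v \<noteq> x" for v
  proof (cases "atom ?V v \<subseteq> bd x")
    case True
    obtain z where z: "z \<in> set (P x)" "z \<noteq> r" "pv z = v" using child_on_path[OF v] by blast
    have zc: "z \<in> ?V \<inter> children E r v" using z unfolding children_def by simp
    have "atom ?V v \<inter> bd z = {}" using zc unfolding atom_def by blast
    moreover have "bd x \<subseteq> bd z" using bdT_mono z(1) by blast
    ultimately have "atom ?V v = {}" using True by blast
    then show ?thesis unfolding T_def using empty_atom[OF g] by simp
  next
    case False then show ?thesis unfolding T_def by simp
  qed
  have "val ?V (bd x) = sum T ?V" unfolding val_def T_def by simp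
  also have "\<dots> = T x + sum T (?V - {x})" using x_in_P[of x] by (simp add: sum.remove)
  also have "sum T (?V - {x}) = 0" using oth by (intro sum.neutral) blast
  finally show ?thesis using nu_val[OF g ad] Tx by simp
qed

lemma nu_strong: assumes ab: "\<And>x. (\<lambda>y. norm (m y)) summable_on children E r x"
  shows "strong_distribution E r nu"
  unfolding strong_distribution_def using nu_dist nu_bd flow ab by simp

end



locale mn = tr +
  fixes p :: "'a \<Rightarrow> 'a \<Rightarrow> real" and f :: "'a \<Rightarrow> 'a \<Rightarrow> complex" and lam :: complex
  assumes p_pos: "\<forall>x y. p x y > 0 \<longleftrightarrow> E x y"
    and f_i: "\<forall>x y. E x y \<longrightarrow> f x y * f y x \<noteq> 1"
    and f_ii: "\<forall>x. ((\<lambda>v. norm (complex_of_real (p x v) * f v x)) summable_on {v. E x v})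
                  \<and> uval E p f x \<noteq> lam"
    and f_iii: "\<forall>x y. E x y \<longrightarrow>
         lam * f x y = complex_of_real (p x y)
                       + (uval E p f x - complex_of_real (p x y) * f y x) * f x y"
begin

abbreviation pc where "pc x y \<equiv> complex_of_real (p x y)"
abbreviation u where "u x \<equiv> uval E p f x"
abbreviation N where "N x \<equiv> {y. E x y}"

lemma eq3: "E x y \<Longrightarrow> lam * f x y = pc x y + (u x - pc x y * f y x) * f x y"
  using f_iii by blast

lemma pnz: "E x y \<Longrightarrow> pc x y \<noteq> 0" using p_pos by force

lemma fnz: assumes "E x y" shows "f x y \<noteq> 0"
proof
  assume "f x y = 0"
  then have "pc x y = 0" using eq3[OF assms] by simp
  then show False using pnz[OF assms] by simp
qed

lemma lu: "lam - u x \<noteq> 0" using f_ii by force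

lemma onefnz: "E x y \<Longrightarrow> 1 - f x y * f y x \<noteq> 0" using f_i by force

lemma KI: assumes e: "E x y" shows "pc x y / f x y - pc x y * f y x = lam - u x"
proof -
  have "pc x y = (lam - u x + pc x y * f y x) * f x y" using eq3[OF e] by (simp add: algebra_simps)
  then show ?thesis using fnz[OF e] by (simp add: field_simps)
qed

lemma KI2: assumes e: "E x y" shows "f x y / (1 - f x y * f y x) = pc x y / (lam - u x)"
proof -
  have "f x y * (lam - u x) = pc x y * (1 - f x y * f y x)" using eq3[OF e] by (simp add: algebra_simps)
  then show ?thesis using onefnz[OF e] lu[of x] by (simp add: field_simps)
qed

lemma fnz_all: "\<forall>a b. E a b \<longrightarrow> f a b \<noteq> 0" using fnz by blast

lemma Fnz: "fext E f r x \<noteq> 0" using fext_nz[OF fnz_all] .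

lemma nbr: "N x = children E r x \<union> (if x = r then {} else {pv x})"
proof -
  have A: "y \<in> N x" if "y \<in> children E r x" for y
    using that child_P(2) unfolding children_def by auto
  have B: "pv x \<in> N x" if "x \<noteq> r" using P_pred(2)[OF that] Esym by simp
  have C: "y \<in> children E r x \<or> (x \<noteq> r \<and> y = pv x)" if "y \<in> N x" for y
    using neighbour[of x y] that unfolding children_def by auto
  show ?thesis
  proof (cases "x = r")
    case True
    have "N x = children E r x"
    proof (intro set_eqI iffI)
      fix y assume "y \<in> N x" then show "y \<in> children E r x" using C True by blast
    next
      fix y assume "y \<in> children E r x" then show "y \<in> N x" using A by blast
    qed
    then show ?thesis using True by simp
  next
    case False
    have "N x = children E r x \<union> {pv x}"
    proof (intro set_eqI iffI)
      fix y assume "y \<in> N x" then show "y \<in> children E r x \<union> {pv x}" using C by blast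
    next
      fix y assume "y \<in> children E r x \<union> {pv x}" then show "y \<in> N x" using A B False by blast
    qed
    then show ?thesis using False by simp
  qed
qed

lemma pv_notchild: "x \<noteq> r \<Longrightarrow> pv x \<notin> children E r x"
proof
  assume x: "x \<noteq> r" and c: "pv x \<in> children E r x"
  then have "length (P (pv x)) = Suc (length (P x))" using child_P(4) unfolding children_def by blast
  then show False using pv_facts(3)[OF x] by simp
qed

lemma N_r: "N r = children E r r" using nbr[of r] by simp

lemma N_nr: "x \<noteq> r \<Longrightarrow> N x = insert (pv x) (children E r x)" using nbr[of x] by simp

lemma Echild: "y \<in> children E r x \<Longrightarrow> E x y" using nbr by blast

lemma uhas: "((\<lambda>v. pc x v * f v x) has_sum u x) (N x)"
proof -
  have "(\<lambda>v. pc x v * f v x) summable_on N x"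
  proof (rule abs_summable_summable)
    show "(\<lambda>v. norm (pc x v * f v x)) summable_on N x" using f_ii by blast
  qed
  then show ?thesis unfolding uval_def by (rule has_sum_infsum)
qed

lemma has_sum_ch: fixes g :: "'a \<Rightarrow> complex" assumes "(g has_sum S) (N x)" "x \<noteq> r"
  shows "(g has_sum S - g (pv x)) (children E r x)"
proof -
  have "(g has_sum g (pv x)) {pv x}" using has_sum_finite[of "{pv x}" g] by simp
  moreover have "{pv x} \<subseteq> N x" using N_nr[OF assms(2)] by simp
  ultimately have "(g has_sum S - g (pv x)) (N x - {pv x})" by (rule has_sum_Diff[OF assms(1)])
  then show ?thesis
    using N_nr[OF assms(2)] pv_notchild[OF assms(2)] by (simp add: insert_Diff_if)
qed

lemma norm_sum_ch: "(\<lambda>y. norm (pc x y * f y x)) summable_on children E r x"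
  using f_ii summable_on_subset_banach[of _ "N x" "children E r x"] nbr by blast

lemma GG_rel: assumes hG: "\<And>x. h x = GG f \<mu> x" and x: "x \<noteq> r"
  shows "h x = f x (pv x) * h (pv x) + \<mu> x * (1 / fext E f r x - f x (pv x) / fext E f r (pv x))"
  using GG_child[OF x refl, of f \<mu>] hG by simp


lemma child_h: assumes hG: "\<And>x. h x = GG f \<mu> x" and y: "y \<in> children E r x"
  shows "pc x y * h y = h x * (pc x y * f y x) + ((lam - u x) / fext E f r x) * \<mu> y"
proof -
  have yr: "y \<noteq> r" "pv y = x" using y unfolding children_def by auto
  have e: "E x y" using Echild[OF y] .
  have hy: "h y = f y x * h x + \<mu> y * (1 / fext E f r y - f y x / fext E f r x)"
    using GG_rel[OF hG yr(1)] yr(2) by simp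
  have Fy: "fext E f r y = fext E f r x * f x y" using fext_child_r[OF yr] .
  have k: "pc x y * (1 / fext E f r y - f y x / fext E f r x) = (lam - u x) / fext E f r x"
  proof -
    have "pc x y * (1 / fext E f r y - f y x / fext E f r x) = (pc x y / f x y - pc x y * f y x) / fext E f r x"
      using Fy fnz[OF e] Fnz[of x] by (simp add: field_simps)
    then show ?thesis using KI[OF e] by simp
  qed
  have "pc x y * h y = h x * (pc x y * f y x) + \<mu> y * (pc x y * (1 / fext E f r y - f y x / fext E f r x))"
    unfolding hy by (simp add: algebra_simps)
  also have "\<dots> = h x * (pc x y * f y x) + \<mu> y * ((lam - u x) / fext E f r x)" by (simp only: k)
  finally show ?thesis by (simp add: mult.commute)
qed

lemma parent_alg:
  fixes q a b hx hp \<mu>x Fp L uu :: complex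
  assumes hx: "hx = a * hp + \<mu>x * (1 / (Fp * b) - a / Fp)" and K: "q / a - q * b = L"
    and nz: "a \<noteq> 0" "b \<noteq> 0" "Fp \<noteq> 0"
  shows "q * hp + hx * (uu - q * b) + L / (Fp * b) * \<mu>x = (L + uu) * hx"
proof -
  have hp: "hp = hx / a - \<mu>x * (1 / (a * Fp * b) - 1 / Fp)"
    using hx nz by (simp add: field_simps)
  have L: "L = q / a - q * b" using K by simp
  show ?thesis unfolding hp L using nz by (simp add: field_simps)
qed

lemma eig_of_rep:
  assumes st: "strong_distribution E r \<nu>"
    and rep: "\<forall>x. h x = dist_integral E r \<nu> (kernel E r f x)"
  shows "is_eigenfunction E p lam h"
  unfolding is_eigenfunction_def
proof (intro allI conjI)
  fix x
  have d: "is_distribution E r \<nu>" using st unfolding strong_distribution_def by blast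
  define \<mu> where "\<mu> v = \<nu> (bd v)" for v
  have hG: "h x = GG f \<mu> x" for x using rep integral_GG[OF d] unfolding \<mu>_def by simp
  have muh: "(\<mu> has_sum \<mu> x) (children E r x)" and mus: "(\<lambda>y. norm (\<mu> y)) summable_on children E r x"
    using st unfolding strong_distribution_def \<mu>_def by auto
  define c where "c = (lam - u x) / fext E f r x"
  have ch: "pc x y * h y = h x * (pc x y * f y x) + c * \<mu> y" if "y \<in> children E r x" for y
    using child_h[OF hG that] unfolding c_def .
  have abs_ch: "(\<lambda>y. norm (pc x y * h y)) summable_on children E r x"
  proof (rule Infinite_Sum.abs_summable_on_comparison_test')
    show "(\<lambda>y. norm (h x) * norm (pc x y * f y x) + norm c * norm (\<mu> y)) summable_on children E r x"
      using norm_sum_ch mus by (intro summable_on_add summable_on_cmult_right)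
    fix y assume "y \<in> children E r x"
    then show "norm (pc x y * h y) \<le> norm (h x) * norm (pc x y * f y x) + norm c * norm (\<mu> y)"
      using ch norm_triangle_ineq[of "h x * (pc x y * f y x)" "c * \<mu> y"] by (simp add: norm_mult)
  qed
  show "(\<lambda>y. norm (pc x y * h y)) summable_on N x"
  proof (cases "x = r")
    case True then show ?thesis using abs_ch N_r by simp
  next
    case False then show ?thesis using abs_ch N_nr[OF False] by (simp add: summable_on_insert_iff)
  qed
  have S2: "((\<lambda>y. pc x y * f y x) has_sum (if x = r then u x else u x - pc x (pv x) * f (pv x) x)) (children E r x)"
  proof (cases "x = r")
    case True then show ?thesis using uhas[of r] N_r by simp
  next
    case False then show ?thesis using has_sum_ch[OF uhas False] by simp
  qed
  have hs_ch: "((\<lambda>y. pc x y * h y) has_sum h x * (if x = r then u x else u x - pc x (pv x) * f (pv x) x) + c * \<mu> x) (children E r x)"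
  proof -
    have "((\<lambda>y. h x * (pc x y * f y x) + c * \<mu> y) has_sum h x * (if x = r then u x else u x - pc x (pv x) * f (pv x) x) + c * \<mu> x) (children E r x)"
      by (intro has_sum_add has_sum_cmult_right S2 muh)
    then show ?thesis using ch by (subst has_sum_cong) auto
  qed
  have hs: "((\<lambda>y. pc x y * h y) has_sum lam * h x) (N x)"
  proof (cases "x = r")
    case True
    have m: "\<mu> r = h r" using hG[of r] GG_r by simp
    have cc: "c = lam - u r" unfolding c_def using True P_r by (simp add: fext_refl)
    have "h x * u x + c * \<mu> x = lam * h x" unfolding True m cc by (simp add: algebra_simps)
    then show ?thesis using hs_ch N_r True by simp
  next
    case False
    let ?p = "pv x"
    have e: "E x ?p" using P_pred(2)[OF False] Esym by blast
    have hx: "h x = f x ?p * h ?p + \<mu> x * (1 / (fext E f r ?p * f ?p x) - f x ?p / fext E f r ?p)"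
      using GG_rel[OF hG False] fext_child_r[OF False refl] by simp
    have "pc x ?p * h ?p + h x * (u x - pc x ?p * f ?p x) + (lam - u x) / (fext E f r ?p * f ?p x) * \<mu> x
        = (lam - u x + u x) * h x"
      using parent_alg[OF hx KI[OF e] fnz[OF e] fnz[OF P_pred(2)[OF False]] Fnz] .
    moreover have "c = (lam - u x) / (fext E f r ?p * f ?p x)" unfolding c_def using fext_child_r[OF False refl] by simp
    ultimately have "pc x ?p * h ?p + (h x * (u x - pc x ?p * f ?p x) + c * \<mu> x) = lam * h x"
      by (simp add: algebra_simps)
    moreover have "((\<lambda>y. pc x y * h y) has_sum pc x ?p * h ?p + (h x * (u x - pc x ?p * f ?p x) + c * \<mu> x)) (N x)"
      using has_sum_insert[OF pv_notchild[OF False], of "\<lambda>y. pc x y * h y"] hs_ch False N_nr[OF False] by simp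
    ultimately show ?thesis by simp
  qed
  show "(\<Sum>\<^sub>\<infinity>y\<in>N x. pc x y * h y) = lam * h x" using infsumI[OF hs] .
qed

lemma uniq:
  assumes st: "strong_distribution E r \<nu>"
    and rep: "\<forall>x. h x = dist_integral E r \<nu> (kernel E r f x)"
  shows "\<nu> (ends E) = h r \<and>
           (\<forall>x. x \<noteq> r \<longrightarrow>
              \<nu> (bdT E r x) = fext E f r x *
                 (h x - fext E f x (pv x) * h (pv x)) /
                 (1 - fext E f (pv x) x * fext E f x (pv x)))"
proof
  have d: "is_distribution E r \<nu>" using st unfolding strong_distribution_def by blast
  define \<mu> where "\<mu> v = \<nu> (bd v)" for v
  have hG: "h x = GG f \<mu> x" for x using rep integral_GG[OF d] unfolding \<mu>_def by simp
  show "\<nu> (ends E) = h r" using hG[of r] GG_r bdT_r unfolding \<mu>_def by simp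
  show "\<forall>x. x \<noteq> r \<longrightarrow> \<nu> (bdT E r x) = fext E f r x * (h x - fext E f x (pv x) * h (pv x)) /
                 (1 - fext E f (pv x) x * fext E f x (pv x))"
  proof (intro allI impI)
    fix x assume x: "x \<noteq> r"
    let ?p = "pv x"
    have e: "E x ?p" "E ?p x" using P_pred(2)[OF x] Esym by blast+
    have fe: "fext E f x ?p = f x ?p" "fext E f ?p x = f ?p x" using fext_edge e by blast+
    have F: "fext E f r x = fext E f r ?p * f ?p x" using fext_child_r[OF x refl] .
    have hx: "h x = f x ?p * h ?p + \<mu> x * (1 / fext E f r x - f x ?p / fext E f r ?p)"
      using GG_rel[OF hG x] .
    have nz: "fext E f r ?p \<noteq> 0" "f ?p x \<noteq> 0" "1 - f ?p x * f x ?p \<noteq> 0"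
      using Fnz fnz e onefnz[OF e(2)] by auto
    have "h x - f x ?p * h ?p = \<mu> x * (1 - f ?p x * f x ?p) / fext E f r x"
      using hx F nz by (simp add: field_simps)
    then have "\<mu> x = fext E f r x * (h x - f x ?p * h ?p) / (1 - f ?p x * f x ?p)"
      using nz F by (simp add: field_simps)
    then show "\<nu> (bdT E r x) = fext E f r x * (h x - fext E f x ?p * h ?p) / (1 - fext E f ?p x * fext E f x ?p)"
      unfolding fe \<mu>_def by simp
  qed
qed


lemma flow_alg:
  fixes a b q L F uu hx hp :: complex
  assumes K2: "a / (1 - a * b) = q / L" and nz: "L \<noteq> 0" "1 - a * b \<noteq> 0"
  shows "F / L * (((L + uu) * hx - q * hp) + (- hx) * (uu - q * b)) = F * (hx - a * hp) / (1 - b * a)"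
proof -
  have nz2: "1 - b * a \<noteq> 0" using nz by (simp add: mult.commute)
  have 1: "((L + uu) * hx - q * hp) + (- hx) * (uu - q * b) = L * hx + q * (b * hx - hp)"
    by (simp add: algebra_simps)
  have 2: "F / L * (L * hx + q * (b * hx - hp)) = F * hx + F * (q / L) * (b * hx - hp)"
    using nz by (simp add: field_simps)
  have 3: "F * hx + F * (a / (1 - a * b)) * (b * hx - hp) = F * (hx - a * hp) / (1 - b * a)"
  proof -
    have "F * hx + F * (a / (1 - a * b)) * (b * hx - hp) = (F * hx * (1 - a * b) + F * a * (b * hx - hp)) / (1 - a * b)"
      using nz by (simp add: field_simps)
    also have "F * hx * (1 - a * b) + F * a * (b * hx - hp) = F * (hx - a * hp)" by (simp add: algebra_simps)
    finally show ?thesis by (simp add: mult.commute)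
  qed
  show ?thesis unfolding 1 2 K2[symmetric] 3 ..
qed

lemma rep_alg:
  fixes a b Fp hx hp :: complex
  assumes nz: "Fp \<noteq> 0" "b \<noteq> 0" "1 - b * a \<noteq> 0"
  shows "a * hp + (Fp * b * (hx - a * hp) / (1 - b * a)) * (1 / (Fp * b) - a / Fp) = hx"
proof -
  have "1 / (Fp * b) - a / Fp = (1 - b * a) / (Fp * b)" using nz by (simp add: field_simps)
  then show ?thesis using nz by simp
qed

lemma rep_of_eig:
  assumes eig: "is_eigenfunction E p lam h"
  shows "\<exists>\<nu>. strong_distribution E r \<nu> \<and> (\<forall>x. h x = dist_integral E r \<nu> (kernel E r f x))"
proof -
  define mh where "mh v = (if v = r then h r else fext E f r v * (h v - fext E f v (pv v) * h (pv v)) /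
                 (1 - fext E f (pv v) v * fext E f v (pv v)))" for v
  have phabs: "(\<lambda>y. norm (pc x y * h y)) summable_on N x" for x
    using eig unfolding is_eigenfunction_def by blast
  have phas: "((\<lambda>y. pc x y * h y) has_sum lam * h x) (N x)" for x
  proof -
    have "(\<lambda>y. pc x y * h y) summable_on N x" by (rule Infinite_Sum.abs_summable_summable[OF phabs])
    from has_sum_infsum[OF this] show ?thesis using eig unfolding is_eigenfunction_def by simp
  qed
  have mh_ch: "mh y = fext E f r x / (lam - u x) * (pc x y * h y + (- h x) * (pc x y * f y x))"
    if y: "y \<in> children E r x" for x y
  proof -
    have yr: "y \<noteq> r" "pv y = x" using y unfolding children_def by auto
    have e: "E x y" "E y x" using Echild[OF y] Esym by blast+
    have "mh y = fext E f r x * (f x y / (1 - f x y * f y x)) * (h y - f y x * h x)"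
      unfolding mh_def using yr fext_edge[OF e(1)] fext_edge[OF e(2)] fext_child_r[OF yr]
      by (simp add: mult.commute)
    also have "\<dots> = fext E f r x * (pc x y / (lam - u x)) * (h y - f y x * h x)" using KI2[OF e(1)] by simp
    finally show ?thesis using lu[of x] by (simp add: field_simps)
  qed
  have S: "((\<lambda>y. g y) has_sum (if x = r then S0 else S0 - g (pv x))) (children E r x)"
    if "((\<lambda>y. g y) has_sum S0) (N x)" for g :: "'a \<Rightarrow> complex" and S0 x
  proof (cases "x = r")
    case True then show ?thesis using that N_r by simp
  next
    case False then show ?thesis using has_sum_ch[OF that False] by simp
  qed
  have flowmh: "(mh has_sum mh x) (children E r x)" for x
  proof -
    let ?K = "fext E f r x / (lam - u x)"
    let ?S1 = "if x = r then lam * h x else lam * h x - pc x (pv x) * h (pv x)"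
    let ?S2 = "if x = r then u x else u x - pc x (pv x) * f (pv x) x"
    have "((\<lambda>y. ?K * (pc x y * h y + (- h x) * (pc x y * f y x))) has_sum ?K * (?S1 + (- h x) * ?S2)) (children E r x)"
      by (intro has_sum_cmult_right has_sum_add S phas uhas)
    then have hs: "(mh has_sum ?K * (?S1 + (- h x) * ?S2)) (children E r x)"
      using mh_ch by (subst has_sum_cong) auto
    have "?K * (?S1 + (- h x) * ?S2) = mh x"
    proof (cases "x = r")
      case True
      then show ?thesis unfolding mh_def using lu[of r] by (simp add: fext_refl field_simps)
    next
      case False
      let ?p = "pv x"
      have e: "E x ?p" "E ?p x" using P_pred(2)[OF False] Esym by blast+
      have "?K * (?S1 + (- h x) * ?S2) = fext E f r x / (lam - u x) * (((lam - u x + u x) * h x - pc x ?p * h ?p) + (- h x) * (u x - pc x ?p * f ?p x))"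
        using False by simp
      also have "\<dots> = fext E f r x * (h x - f x ?p * h ?p) / (1 - f ?p x * f x ?p)"
        by (rule flow_alg[OF KI2[OF e(1)] lu onefnz[OF e(1)]])
      also have "\<dots> = mh x" unfolding mh_def using False fext_edge[OF e(1)] fext_edge[OF e(2)] by simp
      finally show ?thesis .
    qed
    then show ?thesis using hs by simp
  qed
  have absmh: "(\<lambda>y. norm (mh y)) summable_on children E r x" for x
  proof -
    let ?K = "fext E f r x / (lam - u x)"
    have "(\<lambda>y. norm ?K * (norm (pc x y * h y) + norm (h x) * norm (pc x y * f y x))) summable_on children E r x"
    proof (intro summable_on_cmult_right summable_on_add)
      show "(\<lambda>y. norm (pc x y * h y)) summable_on children E r x"
        using summable_on_subset_banach[OF phabs[of x]] nbr by blast
      show "(\<lambda>y. norm (pc x y * f y x)) summable_on children E r x"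
        by (rule norm_sum_ch)
    qed
    then show ?thesis
    proof (rule Infinite_Sum.abs_summable_on_comparison_test')
      fix y assume y: "y \<in> children E r x"
      have "norm (mh y) = norm ?K * norm (pc x y * h y + (- h x) * (pc x y * f y x))"
        using mh_ch[OF y] by (simp only: norm_mult)
      also have "\<dots> \<le> norm ?K * (norm (pc x y * h y) + norm (h x) * norm (pc x y * f y x))"
        using norm_triangle_ineq[of "pc x y * h y" "(- h x) * (pc x y * f y x)"]
        by (intro mult_left_mono) (auto simp: norm_mult)
      finally show "norm (mh y) \<le> norm ?K * (norm (pc x y * h y) + norm (h x) * norm (pc x y * f y x))"
        by simp
    qed
  qed
  interpret M: trm E r mh
    by (intro trm.intro tr.intro trm_axioms.intro tree noleaf flowmh)
  have GGmh: "GG f mh x = h x" for x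
  proof (induction x rule: measure_induct_rule[of "\<lambda>x. length (P x)"])
    case (less x)
    show ?case
    proof (cases "x = r")
      case True then show ?thesis using GG_r unfolding mh_def by simp
    next
      case False
      let ?p = "pv x"
      have e: "E x ?p" "E ?p x" using P_pred(2)[OF False] Esym by blast+
      have IH: "GG f mh ?p = h ?p" using less pv_facts(3)[OF False] by simp
      have F: "fext E f r x = fext E f r ?p * f ?p x" using fext_child_r[OF False refl] .
      have mx: "mh x = fext E f r ?p * f ?p x * (h x - f x ?p * h ?p) / (1 - f ?p x * f x ?p)"
        unfolding mh_def using False fext_edge[OF e(1)] fext_edge[OF e(2)] F by simp
      have "GG f mh x = f x ?p * h ?p + mh x * (1 / (fext E f r ?p * f ?p x) - f x ?p / fext E f r ?p)"
        using GG_child[OF False refl, of f mh] IH F by simp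
      also have "\<dots> = h x" unfolding mx
        by (rule rep_alg[OF Fnz fnz[OF e(2)] onefnz[OF e(2)]])
      finally show ?thesis .
    qed
  qed
  have "strong_distribution E r M.nu" using M.nu_strong absmh by blast
  moreover have "h x = dist_integral E r M.nu (kernel E r f x)" for x
  proof -
    have "dist_integral E r M.nu (kernel E r f x) = GG f (\<lambda>v. M.nu (bd v)) x"
      using integral_GG[OF M.nu_dist] .
    also have "(\<lambda>v. M.nu (bd v)) = mh" using M.nu_bd by (simp add: fun_eq_iff)
    finally show ?thesis using GGmh by simp
  qed
  ultimately show ?thesis by blast
qed

end

theorem theorem3p4:
  fixes E :: "'a \<Rightarrow> 'a \<Rightarrow> bool" and r :: 'a
    and p :: "'a \<Rightarrow> 'a \<Rightarrow> real" and f :: "'a \<Rightarrow> 'a \<Rightarrow> complex"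
    and lam :: complex and h :: "'a \<Rightarrow> complex"
  assumes countable: "countable (UNIV :: 'a set)"
    and tree: "is_tree E"
    and noleaf: "no_leaves E"
    and p_nonneg: "\<forall>x y. p x y \<ge> 0"
    and p_pos: "\<forall>x y. p x y > 0 \<longleftrightarrow> E x y"
    and p_stoch: "\<forall>x. (p x has_sum 1) UNIV"
    and f_i: "\<forall>x y. E x y \<longrightarrow> f x y * f y x \<noteq> 1"
    and f_ii: "\<forall>x. ((\<lambda>v. norm (complex_of_real (p x v) * f v x)) summable_on {v. E x v})
                  \<and> uval E p f x \<noteq> lam"
    and f_iii: "\<forall>x y. E x y \<longrightarrow>
         lam * f x y = complex_of_real (p x y)
                       + (uval E p f x - complex_of_real (p x y) * f y x) * f x y"
  shows "(is_eigenfunction E p lam h \<longleftrightarrow>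
           (\<exists>\<nu>. strong_distribution E r \<nu> \<and>
                (\<forall>x. h x = dist_integral E r \<nu> (kernel E r f x))))
    \<and> (\<forall>\<nu>. strong_distribution E r \<nu> \<and>
              (\<forall>x. h x = dist_integral E r \<nu> (kernel E r f x)) \<longrightarrow>
           \<nu> (ends E) = h r \<and>
           (\<forall>x. x \<noteq> r \<longrightarrow>
              \<nu> (bdT E r x) = fext E f r x *
                 (h x - fext E f x (pred_v E r x) * h (pred_v E r x)) /
                 (1 - fext E f (pred_v E r x) x * fext E f x (pred_v E r x))))"
proof -
  interpret mn E r p f lam
    by (intro mn.intro tr.intro mn_axioms.intro tree noleaf p_pos f_i f_ii f_iii)
  show ?thesis using rep_of_eig eig_of_rep uniq by blast
qed


end
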